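(* Let $m=2n$, let $B$ be a real skew-symmetric $m\times m$ matrix with trivial kernel, let $p\ge2$, $\theta\in\mathbb R$, and let $d$ be a regular positive homogeneous function on $\mathcal G$. Then, in the sense of distributions on $\mathcal G\setminus\{0\}$: (i) $\displaystyle \mathrm{Div}_{\mathcal G}\!\left(\frac{t}{d^{p\theta+1}}\,B^{-1}\nabla_{\mathcal G}d\right)=-\frac12\,\frac{\langle z,\nabla_{\mathcal G}d\rangle}{d^{p\theta+1}}+n\,\frac{t}{d^{p\theta+1}}\,\partial_td$; (ii) $\displaystyle \mathrm{Div}_{\mathcal G}\!\left(\frac{z}{d^{p\theta}}\right)=\frac{2n}{d^{p\theta}}-\frac{p\theta}{d^{p\theta+1}}\langle z,\nabla_{\mathcal G}d\rangle$.
   Context: $\mathcal G$ is $\mathbb R^m\times\mathbb R$ with coordinates $(z,t)$, group law $(z,t)\circ(\eta,\tau)=(z+\eta,t+\tau+\tfrac12\langle Bz,\eta\rangle)$, dilations $\delta_\gamma(z,t)=(\gamma z,\gamma^2t)$. Horizontal vector fields $X_i=\partial_{z_i}+\tfrac12(Bz)_i\partial_t$, $\nabla_{\mathcal G}u=(X_1u,\dots,X_mu)$; horizontal vector fields are identified with $\mathbb R^m$-valued functions via this basis (so e.g. $z$ denotes $\sum_i z_iX_i$). For a horizontal field $V=\sum V_iX_i$, $\mathrm{Div}_{\mathcal G}V=\sum_iX_iV_i$, understood distributionally as $\langle \mathrm{Div}_{\mathcal G}V,\phi\rangle=-\int\langle V,\nabla_{\mathcal G}\phi\rangle$. $L=\{z=0\}$.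 A continuous $d:\mathbb R^{m+1}\to[0,\infty)$ is positive homogeneous if $d(\delta_\lambda(z,t))=\lambda d(z,t)$ for $\lambda>0$ and $d>0$ off the origin; it is regular if (d.1) $d\in C^\infty(\mathcal G\setminus L)$; (d.2) $\nabla_{\mathcal G}d,\partial_td\in L^\infty_{\mathrm{loc}}(\mathcal G\setminus\{0\})$; (d.3) for a.e. $t$, $\lim_{|z|\to0}\langle z/|z|,B^{-1}\nabla_{\mathcal G}d\rangle=0$. *)

theory Defs
  imports "HOL-Analysis.Analysis"
begin

text \<open>Points of the group are pairs (z,t) with z in real^'m and t real.
  B is an m x m real matrix (type real^'m^'m).\<close>

fun Ck_on :: "nat \<Rightarrow> 'a::euclidean_space set \<Rightarrow> ('a \<Rightarrow> real) \<Rightarrow> bool" where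
  "Ck_on 0 S f = continuous_on S f"
| "Ck_on (Suc k) S f =
     ((\<forall>x\<in>S. f differentiable (at x)) \<and>
      (\<forall>v. Ck_on k S (\<lambda>x. frechet_derivative f (at x) v)))"

definition smooth_on :: "'a::euclidean_space set \<Rightarrow> ('a \<Rightarrow> real) \<Rightarrow> bool" where
  "smooth_on S f \<longleftrightarrow> (\<forall>k. Ck_on k S f)"

definition dz :: "'m::finite \<Rightarrow> ((real^'m) \<times> real \<Rightarrow> real) \<Rightarrow> (real^'m) \<times> real \<Rightarrow> real" where
  "dz i f x = frechet_derivative f (at x) (axis i 1, 0)"

definition dt :: "((real^'m::finite) \<times> real \<Rightarrow> real) \<Rightarrow> (real^'m) \<times> real \<Rightarrow> real" where
  "dt f x = frechet_derivative f (at x) (0, 1)"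

definition hgrad :: "real^'m^'m \<Rightarrow> ((real^'m::finite) \<times> real \<Rightarrow> real) \<Rightarrow> (real^'m) \<times> real \<Rightarrow> real^'m" where
  "hgrad B f x = (\<chi> i. dz i f x + (1/2) * (B *v fst x) $ i * dt f x)"

definition Lline :: "((real^'m::finite) \<times> real) set" where
  "Lline = {x. fst x = 0}"

definition pos_homogeneous :: "((real^'m::finite) \<times> real \<Rightarrow> real) \<Rightarrow> bool" where
  "pos_homogeneous d \<longleftrightarrow>
     continuous_on UNIV d \<and> (\<forall>x. d x \<ge> 0) \<and>
     (\<forall>\<gamma> z t. \<gamma> > 0 \<longrightarrow> d (\<gamma> *\<^sub>R z, \<gamma>\<^sup>2 * t) = \<gamma> * d (z, t)) \<and>
     (\<forall>x. x \<noteq> 0 \<longrightarrow> d x > 0)"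

definition regular :: "real^'m^'m \<Rightarrow> ((real^'m::finite) \<times> real \<Rightarrow> real) \<Rightarrow> bool" where
  "regular B d \<longleftrightarrow>
     smooth_on (- Lline) d \<and>
     (\<forall>K. compact K \<and> K \<subseteq> - {0} \<longrightarrow>
        bounded (hgrad B d ` (K - Lline)) \<and> bounded (dt d ` (K - Lline))) \<and>
     (AE t in lborel.
        ((\<lambda>z. (inverse (norm z) *\<^sub>R z) \<bullet> (matrix_inv B *v hgrad B d (z, t))) \<longlongrightarrow> 0) (at 0))"

definition test_fun :: "((real^'m::finite) \<times> real) set \<Rightarrow> ((real^'m) \<times> real \<Rightarrow> real) \<Rightarrow> bool" where
  "test_fun U \<phi> \<longleftrightarrow> smooth_on UNIV \<phi> \<and>
     compact (closure {x. \<phi> x \<noteq> 0}) \<and> closure {x. \<phi> x \<noteq> 0} \<subseteq> U"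

definition hdiv_eq :: "real^'m^'m \<Rightarrow> ((real^'m::finite) \<times> real) set \<Rightarrow>
    ((real^'m) \<times> real \<Rightarrow> real^'m) \<Rightarrow> ((real^'m) \<times> real \<Rightarrow> real) \<Rightarrow> bool" where
  "hdiv_eq B U V F \<longleftrightarrow> (\<forall>\<phi>. test_fun U \<phi> \<longrightarrow>
     integrable lebesgue (\<lambda>x. V x \<bullet> hgrad B \<phi> x) \<and>
     integrable lebesgue (\<lambda>x. F x * \<phi> x) \<and>
     - (\<integral>x. V x \<bullet> hgrad B \<phi> x \<partial>lebesgue) = (\<integral>x. F x * \<phi> x \<partial>lebesgue))"

end

theory Submission
  imports Defs
begin


lemma line_deriv:
  fixes f :: "'a::real_normed_vector \<Rightarrow> real"
  assumes "(f has_derivative f') (at (a + s *\<^sub>R v))"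
  shows "((\<lambda>s. f (a + s *\<^sub>R v)) has_real_derivative f' v) (at s)"
proof -
  have l: "linear f'" using assms has_derivative_linear by blast
  have "((\<lambda>s. a + s *\<^sub>R v) has_derivative (\<lambda>h. h *\<^sub>R v)) (at s)"
    by (auto intro!: derivative_eq_intros)
  from has_derivative_compose[OF this assms]
  have "((\<lambda>s. f (a + s *\<^sub>R v)) has_derivative (\<lambda>h. f' (h *\<^sub>R v))) (at s)" by (simp add: o_def)
  moreover have "(\<lambda>h. f' (h *\<^sub>R v)) = (\<lambda>h. f' v * h)"
    using l by (auto simp: linear_scale)
  ultimately show ?thesis by (simp add: has_field_derivative_def)
qed

lemma cont_compact_bounded:
  fixes g :: "'a::euclidean_space \<Rightarrow> real"
  assumes "continuous_on UNIV g" "compact S" "\<And>x. x \<notin> S \<Longrightarrow> g x = 0"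
  shows "\<exists>M. \<forall>x. \<bar>g x\<bar> \<le> M"
proof -
  have "compact (g ` S)" using assms by (meson compact_continuous_image continuous_on_subset top_greatest)
  then obtain M where "\<forall>y\<in>g ` S. norm y \<le> M" using compact_imp_bounded bounded_iff by metis
  then have "\<bar>g x\<bar> \<le> max M 0" for x using assms(3)[of x] by (cases "x \<in> S") auto
  then show ?thesis by blast
qed

lemma integrable_bounded_compact:
  fixes g :: "'a::euclidean_space \<Rightarrow> real"
  assumes "g \<in> borel_measurable lebesgue" "compact S" "\<And>x. x \<notin> S \<Longrightarrow> g x = 0" "\<And>x. \<bar>g x\<bar> \<le> M"
  shows "integrable lebesgue g"
proof (rule Bochner_Integration.integrable_bound)
  show "integrable lebesgue (\<lambda>x. M * indicator S x)"
    using lmeasurable_compact[OF assms(2)] by (auto simp: fmeasurable_def)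
  show "AE x in lebesgue. norm (g x) \<le> norm (M * indicator S x)"
  proof (rule AE_I2)
    fix x show "norm (g x) \<le> norm (M * indicator S x)"
      using assms(3,4)[of x] by (cases "x \<in> S") auto
  qed
qed (use assms in auto)

lemma cont_borel_lebesgue:
  fixes g :: "'a::euclidean_space \<Rightarrow> 'b::euclidean_space"
  assumes "continuous_on UNIV g"
  shows "g \<in> borel_measurable lebesgue"
  using measurable_completion[of g lborel borel] borel_measurable_continuous_onI[OF assms] by simp


lemma lebesgue_translate:
  fixes g :: "'a::euclidean_space \<Rightarrow> real"
  assumes "continuous_on UNIV g"
  shows "integral\<^sup>L lebesgue (\<lambda>x. g (x + c)) = integral\<^sup>L lebesgue g"
proof -
  have gb: "g \<in> borel_measurable borel" using borel_measurable_continuous_onI[OF assms] .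
  have c2: "continuous_on UNIV (\<lambda>x. g (x + c))"
    using assms by (intro continuous_on_compose2[OF assms]) (auto intro!: continuous_intros)
  have gb2: "(\<lambda>x. g (x + c)) \<in> borel_measurable borel" using borel_measurable_continuous_onI[OF c2] .
  have "integral\<^sup>L lborel g = integral\<^sup>L (distr lborel borel ((+) c)) g"
    by (simp add: lborel_distr_plus)
  also have "\<dots> = integral\<^sup>L lborel (\<lambda>x. g (c + x))"
    by (rule integral_distr) (auto simp: gb)
  finally have "integral\<^sup>L lborel g = integral\<^sup>L lborel (\<lambda>x. g (x + c))" by (simp add: add.commute)
  moreover have "integral\<^sup>L lebesgue g = integral\<^sup>L lborel g"
    by (rule integral_completion) (simp add: gb)
  moreover have "integral\<^sup>L lebesgue (\<lambda>x. g (x + c)) = integral\<^sup>L lborel (\<lambda>x. g (x + c))"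
    by (rule integral_completion) (simp add: gb2)
  ultimately show ?thesis by simp
qed

lemma ibp0:
  fixes g :: "'a::euclidean_space \<Rightarrow> real" and Dg :: "'a \<Rightarrow> 'a \<Rightarrow> real"
  assumes der: "\<And>x. (g has_derivative Dg x) (at x)"
    and cont: "continuous_on UNIV (\<lambda>x. Dg x e)"
    and S: "compact S" and g0: "\<And>x. x \<notin> S \<Longrightarrow> g x = 0" and Dg0: "\<And>x. x \<notin> S \<Longrightarrow> Dg x e = 0"
  shows "integrable lebesgue (\<lambda>x. Dg x e) \<and> integral\<^sup>L lebesgue (\<lambda>x. Dg x e) = 0"
proof -
  have gc: "continuous_on UNIV g"
    using der by (meson continuous_at_imp_continuous_on has_derivative_continuous)
  obtain M where M: "\<And>x. \<bar>Dg x e\<bar> \<le> M" using cont_compact_bounded[OF cont S Dg0] by blast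
  obtain Mg where Mg: "\<And>x. \<bar>g x\<bar> \<le> Mg" using cont_compact_bounded[OF gc S g0] by blast
  have intD: "integrable lebesgue (\<lambda>x. Dg x e)"
    by (rule integrable_bounded_compact[OF cont_borel_lebesgue[OF cont] S Dg0 M])
  define S' where "S' = (\<lambda>p. fst p - snd p *\<^sub>R e) ` (S \<times> {0..1::real})"
  have S': "compact S'" unfolding S'_def
    by (intro compact_continuous_image compact_Times S compact_Icc) (auto intro!: continuous_intros)
  have gcomp: "continuous_on UNIV (\<lambda>x. g (x + c))" for c
    by (intro continuous_on_compose2[OF gc]) (auto intro!: continuous_intros)
  define q where "q k x = (g (x + (1 / Suc k) *\<^sub>R e) - g x) / (1 / Suc k)" for k :: nat and x
  have qint0: "integral\<^sup>L lebesgue (q k) = 0" for k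
  proof -
    let ?h = "1 / real (Suc k)"
    have i1: "integrable lebesgue g"
      by (rule integrable_bounded_compact[OF cont_borel_lebesgue[OF gc] S g0 Mg])
    have i2: "integrable lebesgue (\<lambda>x. g (x + ?h *\<^sub>R e))"
    proof (rule integrable_bounded_compact[OF cont_borel_lebesgue[OF gcomp]])
      show "compact ((\<lambda>x. x - ?h *\<^sub>R e) ` S)"
        by (intro compact_continuous_image S) (auto intro!: continuous_intros)
      show "g (x + ?h *\<^sub>R e) = 0" if "x \<notin> (\<lambda>x. x - ?h *\<^sub>R e) ` S" for x
        using that g0[of "x + ?h *\<^sub>R e"] by (metis (no_types, lifting) add_diff_cancel image_eqI)
      show "\<bar>g (x + ?h *\<^sub>R e)\<bar> \<le> Mg" for x using Mg .
    qed
    have "integral\<^sup>L lebesgue (q k) = integral\<^sup>L lebesgue (\<lambda>x. g (x + ?h *\<^sub>R e) - g x) / ?h"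
      unfolding q_def by (rule integral_divide_zero)
    also have "\<dots> = (integral\<^sup>L lebesgue (\<lambda>x. g (x + ?h *\<^sub>R e)) - integral\<^sup>L lebesgue g) / ?h"
      by (simp only: Bochner_Integration.integral_diff[OF i2 i1])
    also have "\<dots> = 0" using lebesgue_translate[OF gc, of "?h *\<^sub>R e"] by simp
    finally show ?thesis .
  qed
  have lderiv: "((\<lambda>s. g (x + s *\<^sub>R e)) has_real_derivative Dg (x + s *\<^sub>R e) e) (at s)" for x s
    by (rule line_deriv) (rule der)
  have qbound: "\<bar>q k x\<bar> \<le> M * indicator S' x" for k x
  proof (cases "x \<in> S'")
    case False
    let ?h = "1 / real (Suc k)"
    have "x \<in> S \<Longrightarrow> x \<in> S'" unfolding S'_def by (rule image_eqI[where x="(x,0)"]) auto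
    then have "x \<notin> S" using False by blast
    moreover have "x + ?h *\<^sub>R e \<notin> S"
    proof
      assume "x + ?h *\<^sub>R e \<in> S"
      then have "(x + ?h *\<^sub>R e, ?h) \<in> S \<times> {0..1}" by (auto simp: field_simps)
      then have "x \<in> S'" unfolding S'_def by (rule image_eqI[rotated]) auto
      with False show False by simp
    qed
    ultimately show ?thesis using g0 False by (simp add: q_def)
  next
    case True
    let ?h = "1 / real (Suc k)"
    have "?h > 0" by simp
    from MVT2[OF this, of "\<lambda>s. g (x + s *\<^sub>R e)" "\<lambda>s. Dg (x + s *\<^sub>R e) e"] lderiv
    obtain z where "g (x + ?h *\<^sub>R e) - g (x + 0 *\<^sub>R e) = (?h - 0) * Dg (x + z *\<^sub>R e) e" by blast
    then have "q k x = Dg (x + z *\<^sub>R e) e" unfolding q_def by simp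
    then show ?thesis using M True by simp
  qed
  have qlim: "(\<lambda>k. q k x) \<longlonglongrightarrow> Dg x e" for x
  proof -
    have "((\<lambda>s. g (x + s *\<^sub>R e)) has_real_derivative Dg x e) (at 0)"
      using lderiv[of x 0] by simp
    then have L: "((\<lambda>y. (g (x + y *\<^sub>R e) - g x) / y) \<longlongrightarrow> Dg x e) (at 0)"
      by (simp add: has_field_derivative_iff)
    have F: "filterlim (\<lambda>k::nat. 1 / real (Suc k)) (at 0) sequentially"
    proof -
      have "(\<lambda>k::nat. 1 / real (Suc k)) \<longlonglongrightarrow> 0"
        using LIMSEQ_inverse_real_of_nat by (simp add: inverse_eq_divide)
      then have "filterlim (\<lambda>k::nat. 1 / real (Suc k)) (at_right 0) sequentially"
        by (intro tendsto_imp_filterlim_at_right) auto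
      then show ?thesis by (rule filterlim_mono) (auto simp: at_le)
    qed
    show ?thesis using filterlim_compose[OF L F] unfolding q_def by (simp add: o_def)
  qed
  have qmeas: "q k \<in> borel_measurable lebesgue" for k
    unfolding q_def by (intro borel_measurable_divide borel_measurable_diff cont_borel_lebesgue gcomp gc) auto
  have DC: "(\<lambda>k. integral\<^sup>L lebesgue (q k)) \<longlonglongrightarrow> integral\<^sup>L lebesgue (\<lambda>x. Dg x e)"
  proof (rule integral_dominated_convergence[where w="\<lambda>x. M * indicator S' x"])
    show "integrable lebesgue (\<lambda>x. M * indicator S' x)"
      using lmeasurable_compact[OF S'] by (auto simp: fmeasurable_def)
    show "(\<lambda>x. Dg x e) \<in> borel_measurable lebesgue" by (rule cont_borel_lebesgue[OF cont])
    show "q k \<in> borel_measurable lebesgue" for k by (rule qmeas)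
    show "AE x in lebesgue. (\<lambda>k. q k x) \<longlonglongrightarrow> Dg x e" by (rule AE_I2) (rule qlim)
    show "AE x in lebesgue. norm (q k x) \<le> M * indicator S' x" for k by (rule AE_I2) (simp add: qbound)
  qed
  then have "integral\<^sup>L lebesgue (\<lambda>x. Dg x e) = 0"
    using qint0 by (simp add: LIMSEQ_const_iff)
  with intD show ?thesis by simp
qed


lemma schwarz_delta:
  fixes f :: "'a::real_normed_vector \<Rightarrow> real"
  assumes d1: "\<And>y. y \<in> S \<Longrightarrow> (f has_derivative Df y) (at y)"
  and d2v: "\<And>y. y \<in> S \<Longrightarrow> ((\<lambda>y. Df y v) has_derivative D2v y) (at y)"
  and h: "h > 0" and inS: "\<And>s r. 0 \<le> s \<Longrightarrow> s \<le> h \<Longrightarrow> 0 \<le> r \<Longrightarrow> r \<le> h \<Longrightarrow> x + s *\<^sub>R v + r *\<^sub>R w \<in> S"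
  shows "\<exists>s r. 0 < s \<and> s < h \<and> 0 < r \<and> r < h \<and>
     f (x + h *\<^sub>R v + h *\<^sub>R w) - f (x + h *\<^sub>R v) - f (x + h *\<^sub>R w) + f x = h * h * D2v (x + s *\<^sub>R v + r *\<^sub>R w) w"
proof -
  define u where "u s = f ((x + h *\<^sub>R w) + s *\<^sub>R v) - f (x + s *\<^sub>R v)" for s
  have "(u has_real_derivative (Df ((x + h *\<^sub>R w) + s *\<^sub>R v) v - Df (x + s *\<^sub>R v) v)) (at s)"
    if "0 \<le> s" "s \<le> h" for s
  proof -
    have a: "(x + h *\<^sub>R w) + s *\<^sub>R v \<in> S" using inS[of s h] that h by (simp add: algebra_simps)
    have b: "x + s *\<^sub>R v \<in> S" using inS[of s 0] that h by simp
    show ?thesis unfolding u_def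
      by (intro DERIV_diff line_deriv d1 a b)
  qed
  from MVT2[OF h this] obtain s where s: "0 < s" "s < h"
    "u h - u 0 = (h - 0) * (Df ((x + h *\<^sub>R w) + s *\<^sub>R v) v - Df (x + s *\<^sub>R v) v)" by blast
  define q where "q r = Df ((x + s *\<^sub>R v) + r *\<^sub>R w) v" for r
  have "(q has_real_derivative D2v ((x + s *\<^sub>R v) + r *\<^sub>R w) w) (at r)" if "0 \<le> r" "r \<le> h" for r
  proof -
    have a: "(x + s *\<^sub>R v) + r *\<^sub>R w \<in> S" using inS[of s r] that s by simp
    show ?thesis unfolding q_def by (intro line_deriv d2v a)
  qed
  from MVT2[OF h this] obtain r where r: "0 < r" "r < h"
    "q h - q 0 = (h - 0) * D2v ((x + s *\<^sub>R v) + r *\<^sub>R w) w" by blast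
  have "f (x + h *\<^sub>R v + h *\<^sub>R w) - f (x + h *\<^sub>R v) - f (x + h *\<^sub>R w) + f x = u h - u 0"
    unfolding u_def by (simp add: algebra_simps)
  also have "\<dots> = h * (q h - q 0)" using s(3) unfolding q_def by (simp add: algebra_simps)
  also have "\<dots> = h * h * D2v (x + s *\<^sub>R v + r *\<^sub>R w) w" using r(3) by simp
  finally show ?thesis using s r by blast
qed

lemma schwarz:
  fixes f :: "'a::real_normed_vector \<Rightarrow> real"
  assumes S: "open S" "x \<in> S"
  and d1: "\<And>y. y \<in> S \<Longrightarrow> (f has_derivative Df y) (at y)"
  and d2v: "\<And>y. y \<in> S \<Longrightarrow> ((\<lambda>y. Df y v) has_derivative D2v y) (at y)"
  and d2w: "\<And>y. y \<in> S \<Longrightarrow> ((\<lambda>y. Df y w) has_derivative D2w y) (at y)"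
  and cv: "continuous (at x) (\<lambda>y. D2v y w)"
  and cw: "continuous (at x) (\<lambda>y. D2w y v)"
  shows "D2v x w = D2w x v"
proof (rule ccontr)
  assume ne: "D2v x w \<noteq> D2w x v"
  define \<epsilon> where "\<epsilon> = \<bar>D2v x w - D2w x v\<bar> / 2"
  have ep: "\<epsilon> > 0" using ne by (simp add: \<epsilon>_def)
  obtain d1 where d1p: "d1 > 0" and d1c: "\<And>y. dist y x < d1 \<Longrightarrow> dist (D2v y w) (D2v x w) < \<epsilon>"
    using cv ep unfolding continuous_at_eps_delta by blast
  obtain d2 where d2p: "d2 > 0" and d2c: "\<And>y. dist y x < d2 \<Longrightarrow> dist (D2w y v) (D2w x v) < \<epsilon>"
    using cw ep unfolding continuous_at_eps_delta by blast
  obtain \<rho> where \<rho>: "\<rho> > 0" "ball x \<rho> \<subseteq> S" using S open_contains_ball by blast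
  define \<delta> where "\<delta> = min \<rho> (min d1 d2)"
  have \<delta>p: "\<delta> > 0" using \<rho> d1p d2p by (simp add: \<delta>_def)
  define h where "h = \<delta> / (2 * (norm v + norm w + 1))"
  have np: "norm v + norm w + 1 > 0" using norm_ge_zero[of v] norm_ge_zero[of w] by linarith
  have hp: "h > 0" using \<delta>p np unfolding h_def by (intro divide_pos_pos) auto
  have near: "dist (x + s *\<^sub>R v + r *\<^sub>R w) x < \<delta>" if "0 \<le> s" "s \<le> h" "0 \<le> r" "r \<le> h" for s r
  proof -
    have "dist (x + s *\<^sub>R v + r *\<^sub>R w) x = norm (s *\<^sub>R v + r *\<^sub>R w)" by (simp add: dist_norm)
    also have "\<dots> \<le> s * norm v + r * norm w" using that by (metis abs_of_nonneg norm_scaleR norm_triangle_ineq order_refl add_mono)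
    also have "\<dots> \<le> h * norm v + h * norm w" using that by (intro add_mono mult_right_mono) auto
    also have "\<dots> < \<delta>"
    proof -
      have "h * (norm v + norm w) < h * (2 * (norm v + norm w + 1))" using hp np by (intro mult_strict_left_mono) auto
      also have "\<dots> = \<delta>" unfolding h_def using np by (simp add: field_simps)
      finally show ?thesis by (simp add: algebra_simps)
    qed
    finally show ?thesis .
  qed
  have inS1: "x + s *\<^sub>R v + r *\<^sub>R w \<in> S" if "0 \<le> s" "s \<le> h" "0 \<le> r" "r \<le> h" for s r
    using near[OF that] \<rho> unfolding \<delta>_def by (auto simp: dist_commute subset_iff)
  have inS2: "x + s *\<^sub>R w + r *\<^sub>R v \<in> S" if "0 \<le> s" "s \<le> h" "0 \<le> r" "r \<le> h" for s r
    using inS1[of r s] that by (simp add: algebra_simps)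
  obtain s1 r1 where sr1: "0 < s1" "s1 < h" "0 < r1" "r1 < h"
    "f (x + h *\<^sub>R v + h *\<^sub>R w) - f (x + h *\<^sub>R v) - f (x + h *\<^sub>R w) + f x = h * h * D2v (x + s1 *\<^sub>R v + r1 *\<^sub>R w) w"
    using schwarz_delta[OF d1 d2v hp inS1] by blast
  obtain s2 r2 where sr2: "0 < s2" "s2 < h" "0 < r2" "r2 < h"
    "f (x + h *\<^sub>R w + h *\<^sub>R v) - f (x + h *\<^sub>R w) - f (x + h *\<^sub>R v) + f x = h * h * D2w (x + s2 *\<^sub>R w + r2 *\<^sub>R v) v"
    using schwarz_delta[OF d1 d2w hp inS2] by blast
  have eq: "D2v (x + s1 *\<^sub>R v + r1 *\<^sub>R w) w = D2w (x + s2 *\<^sub>R w + r2 *\<^sub>R v) v"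
    using sr1(5) sr2(5) hp by (simp add: algebra_simps)
  have n1: "dist (x + s1 *\<^sub>R v + r1 *\<^sub>R w) x < d1"
    using near[of s1 r1] sr1 unfolding \<delta>_def by auto
  have n2: "dist (x + s2 *\<^sub>R w + r2 *\<^sub>R v) x < d2"
    using near[of r2 s2] sr2 unfolding \<delta>_def by (auto simp: algebra_simps)
  have "\<bar>D2v x w - D2w x v\<bar> < \<epsilon> + \<epsilon>"
    using d1c[OF n1] d2c[OF n2] eq by (simp add: dist_real_def)
  then show False unfolding \<epsilon>_def by simp
qed


lemma deriv_glue:
  fixes f g h :: "real \<Rightarrow> real"
  assumes "\<And>s. a - 1 < s \<Longrightarrow> s \<le> a \<Longrightarrow> f s = g s" "\<And>s. s \<ge> a \<Longrightarrow> s < a + 1 \<Longrightarrow> f s = h s"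
    "(g has_real_derivative D) (at a)" "(h has_real_derivative D) (at a)"
  shows "(f has_real_derivative D) (at a)"
proof -
  have fa: "f a = g a" "f a = h a" using assms(1)[of a] assms(2)[of a] by auto
  have L: "((\<lambda>y. (g y - g a) / (y - a)) \<longlongrightarrow> D) (at a)" using assms(3) by (simp add: has_field_derivative_iff)
  have R: "((\<lambda>y. (h y - h a) / (y - a)) \<longlongrightarrow> D) (at a)" using assms(4) by (simp add: has_field_derivative_iff)
  have "((\<lambda>y. (f y - f a) / (y - a)) \<longlongrightarrow> D) (at_left a)"
  proof (rule Lim_transform_eventually[OF tendsto_mono[OF at_le L]])
    show "\<forall>\<^sub>F y in at_left a. (g y - g a) / (y - a) = (f y - f a) / (y - a)"
      using fa by (auto simp: eventually_at_left_field assms(1) intro!: exI[of _ "a - 1"])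
  qed (simp add: at_le)
  moreover have "((\<lambda>y. (f y - f a) / (y - a)) \<longlongrightarrow> D) (at_right a)"
  proof (rule Lim_transform_eventually[OF tendsto_mono[OF at_le R]])
    show "\<forall>\<^sub>F y in at_right a. (h y - h a) / (y - a) = (f y - f a) / (y - a)"
      using fa by (auto simp: eventually_at_right_field assms(2) intro!: exI[of _ "a + 1"])
  qed (simp add: at_le)
  ultimately show ?thesis by (simp add: has_field_derivative_iff filterlim_split_at)
qed

definition clampc :: "real \<Rightarrow> real" where "clampc s = max 0 (min 1 (s - 1))"
definition eta :: "real \<Rightarrow> real" where
  "eta s = 3 * (clampc s)^2 - 2 * (clampc s)^3"
definition eta' :: "real \<Rightarrow> real" where
  "eta' s = 6 * clampc s - 6 * (clampc s)^2"

lemma clampc_simps: "s \<le> 1 \<Longrightarrow> clampc s = 0" "1 \<le> s \<Longrightarrow> s \<le> 2 \<Longrightarrow> clampc s = s - 1" "2 \<le> s \<Longrightarrow> clampc s = 1"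
  by (auto simp: clampc_def)

lemma eta_poly_deriv: "((\<lambda>s. 3 * (s - 1)^2 - 2 * (s - 1)^3) has_real_derivative (6 * (s - 1) - 6 * (s - 1)^2)) (at s)"
  by (auto intro!: derivative_eq_intros simp: power2_eq_square)

lemma eta_deriv: "(eta has_real_derivative eta' s) (at s)"
proof -
  consider "s < 1" | "s = 1" | "1 < s" "s < 2" | "s = 2" | "s > 2" by linarith
  then show ?thesis
  proof cases
    case 1
    have "(eta has_real_derivative 0) (at s)"
      by (rule has_field_derivative_transform_within_open[where S="{..<1}" and f="\<lambda>_. 0"])
        (use 1 in \<open>auto simp: eta_def clampc_simps\<close>)
    then show ?thesis using 1 by (simp add: eta'_def clampc_simps)
  next
    case 2
    have "(eta has_real_derivative 0) (at 1)"
      by (rule deriv_glue[where g="\<lambda>_. 0" and h="\<lambda>s. 3 * (s - 1)^2 - 2 * (s - 1)^3"])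
        (use eta_poly_deriv[of 1] in \<open>auto simp: eta_def clampc_def\<close>)
    then show ?thesis using 2 by (simp add: eta'_def clampc_simps)
  next
    case 3
    have "(eta has_real_derivative (6 * (s - 1) - 6 * (s - 1)^2)) (at s)"
      by (rule has_field_derivative_transform_within_open[where S="{1<..<2}" and f="\<lambda>s. 3 * (s - 1)^2 - 2 * (s - 1)^3"])
        (use 3 eta_poly_deriv in \<open>auto simp: eta_def clampc_simps\<close>)
    then show ?thesis using 3 by (simp add: eta'_def clampc_simps)
  next
    case 4
    have "(eta has_real_derivative 0) (at 2)"
      by (rule deriv_glue[where h="\<lambda>_. 1" and g="\<lambda>s. 3 * (s - 1)^2 - 2 * (s - 1)^3"])
        (use eta_poly_deriv[of 2] in \<open>auto simp: eta_def clampc_def\<close>)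
    then show ?thesis using 4 by (simp add: eta'_def clampc_simps)
  next
    case 5
    have "(eta has_real_derivative 0) (at s)"
      by (rule has_field_derivative_transform_within_open[where S="{2<..}" and f="\<lambda>_. 1"])
        (use 5 in \<open>auto simp: eta_def clampc_simps\<close>)
    then show ?thesis using 5 by (simp add: eta'_def clampc_simps)
  qed
qed

lemma eta'_cont: "continuous_on UNIV eta'"
  unfolding eta'_def clampc_def by (intro continuous_intros)

lemma eta_cont: "continuous_on UNIV eta"
  unfolding eta_def clampc_def by (intro continuous_intros)

lemma eta_range: "0 \<le> eta s" "eta s \<le> 1"
proof -
  have c: "0 \<le> clampc s" "clampc s \<le> 1" by (auto simp: clampc_def)
  let ?c = "clampc s"
  have "eta s = ?c^2 * (3 - 2 * ?c)" by (simp add: eta_def power2_eq_square power3_eq_cube algebra_simps)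
  then show "0 \<le> eta s" using c by simp
  have "1 - eta s = (1 - ?c)^2 * (1 + 2 * ?c)" by (simp add: eta_def power2_eq_square power3_eq_cube algebra_simps)
  then show "eta s \<le> 1" using c by (metis diff_ge_0_iff_ge mult_nonneg_nonneg zero_le_power2 add_nonneg_nonneg zero_le_one mult_2 )
qed

lemma eta'_bound: "\<bar>eta' s\<bar> \<le> 2"
proof -
  have c: "0 \<le> clampc s" "clampc s \<le> 1" by (auto simp: clampc_def)
  have "eta' s = 6 * clampc s * (1 - clampc s)" by (simp add: eta'_def power2_eq_square algebra_simps)
  moreover have "clampc s * (1 - clampc s) \<le> 1/4"
  proof -
    have "clampc s * (1 - clampc s) = 1/4 - (clampc s - 1/2)^2" by (simp add: power2_eq_square algebra_simps)
    then show ?thesis using zero_le_power2[of "clampc s - 1/2"] by linarith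
  qed
  moreover have "0 \<le> clampc s * (1 - clampc s)" using c by simp
  ultimately show ?thesis by (simp add: abs_if)
qed

lemma eta_zero: "s \<le> 1 \<Longrightarrow> eta s = 0" "s \<le> 1 \<Longrightarrow> eta' s = 0"
  by (auto simp: eta_def eta'_def clampc_simps)
lemma eta_one: "s \<ge> 2 \<Longrightarrow> eta s = 1" "s \<ge> 2 \<Longrightarrow> eta' s = 0"
  by (auto simp: eta_def eta'_def clampc_simps)


definition cut :: "real \<Rightarrow> ('b::real_inner \<times> real) \<Rightarrow> real" where
  "cut r x = eta ((fst x \<bullet> fst x) / r\<^sup>2)"
definition cutG :: "real \<Rightarrow> ('b::real_inner \<times> real) \<Rightarrow> 'b" where
  "cutG r x = (eta' ((fst x \<bullet> fst x) / r\<^sup>2) * 2 / r\<^sup>2) *\<^sub>R fst x"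

lemma cut_deriv: assumes r: "r > 0" shows "(cut r has_derivative (\<lambda>w. cutG r x \<bullet> fst w)) (at x)"
proof -
  have g0: "((\<lambda>x. (fst x \<bullet> fst x)) has_derivative (\<lambda>w. (fst w \<bullet> fst x + fst x \<bullet> fst w))) (at x)"
    by (auto intro!: derivative_eq_intros)
  have g: "((\<lambda>x. (fst x \<bullet> fst x) / r\<^sup>2) has_derivative (\<lambda>w. (fst w \<bullet> fst x + fst x \<bullet> fst w) / r\<^sup>2)) (at x)"
    by (rule has_derivative_eq_rhs[OF has_derivative_divide'[OF g0 has_derivative_const[of "r\<^sup>2"]]])
      (use r in \<open>auto simp: fun_eq_iff field_simps power2_eq_square\<close>)
  have D: "((\<lambda>x. eta ((fst x \<bullet> fst x) / r\<^sup>2)) has_derivative (\<lambda>w. (fst w \<bullet> fst x + fst x \<bullet> fst w) / r\<^sup>2 * eta' ((fst x \<bullet> fst x) / r\<^sup>2))) (at x)"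
    by (rule DERIV_compose_FDERIV[OF eta_deriv g])
  have eq: "(\<lambda>w. (fst w \<bullet> fst x + fst x \<bullet> fst w) / r\<^sup>2 * eta' ((fst x \<bullet> fst x) / r\<^sup>2)) = (\<lambda>w. cutG r x \<bullet> fst w)"
    by (auto simp: cutG_def fun_eq_iff inner_commute algebra_simps)
  show ?thesis unfolding cut_def[abs_def] using D unfolding eq .
qed

lemma cutG_cont: assumes r: "r > 0" shows "continuous_on UNIV (cutG r :: ('b::real_inner \<times> real) \<Rightarrow> 'b)"
  unfolding cutG_def
  using r by (intro continuous_intros continuous_on_compose2[OF eta'_cont]) auto

lemma cut_cont: assumes r: "r > 0" shows "continuous_on UNIV (cut r :: ('b::real_inner \<times> real) \<Rightarrow> real)"
  unfolding cut_def[abs_def]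
  using r by (intro continuous_intros continuous_on_compose2[OF eta_cont]) auto

lemma cut_small:
  assumes "r > 0" "norm (fst x) \<le> r"
  shows "cut r x = 0" "cutG r x = 0"
proof -
  have "fst x \<bullet> fst x \<le> r\<^sup>2" using assms
    by (metis norm_ge_zero power2_norm_eq_inner power_mono)
  then have "(fst x \<bullet> fst x) / r\<^sup>2 \<le> 1" using assms by simp
  then show "cut r x = 0" "cutG r x = 0" by (auto simp: cut_def cutG_def eta_zero)
qed

lemma cut_big:
  assumes "r > 0" "norm (fst x) \<ge> 2 * r"
  shows "cut r x = 1" "cutG r x = 0"
proof -
  have "(2 * r)\<^sup>2 \<le> fst x \<bullet> fst x" using assms
    by (metis power2_norm_eq_inner power_mono less_eq_real_def mult_pos_pos zero_less_numeral)
  moreover have "2 * r\<^sup>2 \<le> (2 * r)\<^sup>2" using assms by (simp add: power2_eq_square)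
  ultimately have "2 * r\<^sup>2 \<le> fst x \<bullet> fst x" by linarith
  then have "(fst x \<bullet> fst x) / r\<^sup>2 \<ge> 2" using assms by (simp add: field_simps)
  then show "cut r x = 1" "cutG r x = 0" by (auto simp: cut_def cutG_def eta_one)
qed

lemma cut_range: "0 \<le> cut r x" "cut r x \<le> 1"
  by (auto simp: cut_def eta_range)

lemma cutG_bound:
  assumes "r > 0"
  shows "norm (cutG r x) \<le> 8 / r"
proof (cases "norm (fst x) \<ge> 2 * r")
  case True
  then show ?thesis using cut_big[OF assms True] assms by simp
next
  case False
  have "norm (cutG r x) = \<bar>eta' ((fst x \<bullet> fst x) / r\<^sup>2)\<bar> * 2 / r\<^sup>2 * norm (fst x)"
    by (simp add: cutG_def abs_mult)
  also have "\<dots> \<le> 2 * 2 / r\<^sup>2 * (2 * r)"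
    using False eta'_bound assms by (intro mult_mono divide_right_mono) auto
  also have "\<dots> = 8 / r" using assms by (simp add: power2_eq_square field_simps)
  finally show ?thesis .
qed

lemma cutG_support:
  assumes "r > 0" "cutG r x \<noteq> 0"
  shows "norm (fst x) < 2 * r"
proof (rule ccontr)
  assume "\<not> norm (fst x) < 2 * r"
  then have "2 * r \<le> norm (fst x)" by simp
  then show False using cut_big(2)[OF assms(1) \<open>2 * r \<le> norm (fst x)\<close>] assms(2) by simp
qed


lemma Lline_null: "(Lline :: ((real^'m::finite) \<times> real) set) \<in> null_sets lebesgue"
proof -
  obtain i :: 'm where True by blast
  have "negligible {x :: (real^'m) \<times> real. (axis i 1, 0) \<bullet> x = 0}"
    by (rule negligible_hyperplane) (simp add: zero_prod_def axis_eq_0_iff)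
  moreover have "Lline \<subseteq> {x :: (real^'m) \<times> real. (axis i 1, 0) \<bullet> x = 0}"
    by (auto simp: Lline_def inner_prod_def)
  ultimately have "negligible (Lline :: ((real^'m::finite) \<times> real) set)" by (rule negligible_subset)
  then show ?thesis by (simp add: negligible_iff_null_sets)
qed

lemma Lline_open: "open (- (Lline :: ((real^'m::finite) \<times> real) set))"
proof -
  have "- (Lline :: ((real^'m::finite) \<times> real) set) = fst -` (- {0})" by (auto simp: Lline_def)
  moreover have "open (fst -` (- {0::real^'m}) :: ((real^'m::finite) \<times> real) set)"
    by (intro open_vimage_fst) auto
  ultimately show ?thesis by simp
qed

lemma Lline_closed: "closed (Lline :: ((real^'m::finite) \<times> real) set)"
  using Lline_open by (simp add: closed_def)

lemma notin_Lline: "x \<notin> Lline \<longleftrightarrow> fst x \<noteq> 0" by (simp add: Lline_def)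

lemma Bz_linear: "bounded_linear (\<lambda>x :: (real^'m::finite) \<times> real. (B *v fst x) $ i)"
proof -
  have "linear (\<lambda>x :: (real^'m::finite) \<times> real. (B *v fst x) $ i)"
    by (intro linearI) (simp_all add: matrix_vector_right_distrib matrix_vector_mult_scaleR)
  then show ?thesis by (simp add: linear_conv_bounded_linear)
qed

lemma Bz_deriv: "((\<lambda>x :: (real^'m::finite) \<times> real. (B *v fst x) $ i) has_derivative (\<lambda>w. (B *v fst w) $ i)) F"
  using Bz_linear bounded_linear_imp_has_derivative by blast

lemma Bz_cont: "continuous_on S (\<lambda>x :: (real^'m::finite) \<times> real. (B *v fst x) $ i)"
  using Bz_linear linear_continuous_on by blast

lemma deriv_zero_outside:
  fixes f :: "'a::real_normed_vector \<Rightarrow> real"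
  assumes "open U" "x \<in> U" "\<And>y. y \<in> U \<Longrightarrow> f y = 0"
  shows "(f has_derivative (\<lambda>_. 0)) (at x)"
  by (rule has_derivative_transform_within_open[OF has_derivative_const[of 0] assms(1,2)]) (use assms(3) in auto)

lemma Ck_SucD1: "Ck_on (Suc k) S f \<Longrightarrow> x \<in> S \<Longrightarrow> f differentiable (at x)"
  unfolding Ck_on.simps by blast
lemma Ck_SucD2: "Ck_on (Suc k) S f \<Longrightarrow> Ck_on k S (\<lambda>x. frechet_derivative f (at x) v)"
  unfolding Ck_on.simps by blast
lemma Ck_0D: "Ck_on 0 S f \<Longrightarrow> continuous_on S f"
  unfolding Ck_on.simps by blast
lemma smooth_Ck: "smooth_on S f \<Longrightarrow> Ck_on k S f"
  unfolding smooth_on_def by blast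

lemma test_fun_facts:
  fixes \<phi> :: "(real^'m::finite) \<times> real \<Rightarrow> real"
  assumes "test_fun (-{0}) \<phi>"
  defines "K \<equiv> closure {x. \<phi> x \<noteq> 0}"
  shows "compact K" "K \<subseteq> -{0}" "\<And>x. (\<phi> has_derivative frechet_derivative \<phi> (at x)) (at x)"
   "\<And>v. continuous_on UNIV (\<lambda>x. frechet_derivative \<phi> (at x) v)"
   "\<And>x. x \<notin> K \<Longrightarrow> \<phi> x = 0" "\<And>x. x \<notin> K \<Longrightarrow> frechet_derivative \<phi> (at x) = (\<lambda>v. 0)"
   "continuous_on UNIV \<phi>"
proof -
  show "compact K" "K \<subseteq> -{0}" using assms unfolding test_fun_def K_def by blast+
  have C1: "Ck_on (Suc 0) UNIV \<phi>" using assms unfolding test_fun_def by (blast intro: smooth_Ck)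
  have d: "\<And>x. \<phi> differentiable (at x)" using Ck_SucD1[OF C1] by blast
  have c: "\<And>v. continuous_on UNIV (\<lambda>x. frechet_derivative \<phi> (at x) v)" using Ck_0D[OF Ck_SucD2[OF C1]] by blast
  show "\<And>x. (\<phi> has_derivative frechet_derivative \<phi> (at x)) (at x)" using d by (simp add: frechet_derivative_works[symmetric])
  show "\<And>v. continuous_on UNIV (\<lambda>x. frechet_derivative \<phi> (at x) v)" by (rule c)
  show z: "\<And>x. x \<notin> K \<Longrightarrow> \<phi> x = 0"
  proof -
    fix x assume "x \<notin> K"
    then have "x \<notin> {x. \<phi> x \<noteq> 0}" using closure_subset[of "{x. \<phi> x \<noteq> 0}"] unfolding K_def by blast
    then show "\<phi> x = 0" by simp
  qed
  show "\<And>x. x \<notin> K \<Longrightarrow> frechet_derivative \<phi> (at x) = (\<lambda>v. 0)"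
  proof -
    fix x assume "x \<notin> K"
    have "(\<phi> has_derivative (\<lambda>_. 0)) (at x)"
    proof (rule deriv_zero_outside[where U="-K"])
      show "open (- K)" unfolding K_def by (intro open_Compl closed_closure)
    qed (use \<open>x \<notin> K\<close> z in auto)
    then show "frechet_derivative \<phi> (at x) = (\<lambda>v. 0)" by (simp add: frechet_derivative_at[symmetric])
  qed
  show "continuous_on UNIV \<phi>"
    by (intro continuous_at_imp_continuous_on ballI differentiable_imp_continuous_within d)
qed

lemma hgrad_eq:
  assumes "(f has_derivative Df) (at x)"
  shows "hgrad B f x = (\<chi> i. Df (axis i 1, 0) + 1/2 * (B *v fst x) $ i * Df (0, 1))"
  using frechet_derivative_at[OF assms] by (simp add: hgrad_def dz_def dt_def)


lemma meas_offL:
  fixes h :: "(real^'m::finite) \<times> real \<Rightarrow> real"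
  assumes "continuous_on (-Lline) h"
  shows "h \<in> borel_measurable lebesgue"
proof -
  let ?g = "\<lambda>x. if x \<in> -Lline then h x else 0"
  have "?g \<in> borel_measurable borel"
    by (rule borel_measurable_continuous_on_if) (use assms Lline_open in \<open>auto intro: borel_open\<close>)
  then have g: "?g \<in> borel_measurable lebesgue"
    using measurable_completion[of ?g lborel borel] by simp
  have "AE x in lebesgue. ?g x = h x"
    using AE_not_in[OF Lline_null] by eventually_elim auto
  then show ?thesis using borel_measurable_AE[OF g] by blast
qed

locale gdiv =
  fixes B :: "real^'m::finite^'m" and V :: "(real^'m) \<times> real \<Rightarrow> real^'m" and F :: "(real^'m) \<times> real \<Rightarrow> real"
    and DV :: "'m \<Rightarrow> (real^'m) \<times> real \<Rightarrow> (real^'m) \<times> real \<Rightarrow> real"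
  assumes m2: "CARD('m) \<ge> 2"
  and DV: "\<And>i x. x \<notin> Lline \<Longrightarrow> ((\<lambda>y. V y $ i) has_derivative DV i x) (at x)"
  and DVc: "\<And>i v. continuous_on (-Lline) (\<lambda>x. DV i x v)"
  and Fe: "\<And>x. x \<notin> Lline \<Longrightarrow> F x = (\<Sum>i\<in>UNIV. DV i x (axis i 1, 0) + 1/2 * (B *v fst x) $ i * DV i x (0,1))"
  and Vb: "\<And>K. compact K \<Longrightarrow> K \<subseteq> -{0} \<Longrightarrow> \<exists>M. \<forall>x\<in>K-Lline. norm (V x) \<le> M"
  and Fb: "\<And>K. compact K \<Longrightarrow> K \<subseteq> -{0} \<Longrightarrow> \<exists>M. \<forall>x\<in>K-Lline. \<bar>F x\<bar> \<le> M"
begin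

lemma Vi_cont: "continuous_on (-Lline) (\<lambda>x. V x $ i)"
  by (intro continuous_at_imp_continuous_on ballI has_derivative_continuous[OF DV]) auto

lemma V_cont: "continuous_on (-Lline) V"
proof -
  have "continuous_on (-Lline) (\<lambda>x. \<chi> i. V x $ i)" by (intro continuous_on_vec_lambda Vi_cont)
  then show ?thesis by simp
qed

lemma F_cont: "continuous_on (-Lline) F"
proof -
  have "continuous_on (-Lline) (\<lambda>x. \<Sum>i\<in>UNIV. DV i x (axis i 1, 0) + 1/2 * (B *v fst x) $ i * DV i x (0,1))"
    by (intro continuous_intros DVc Bz_cont)
  then show ?thesis by (rule continuous_on_cong[THEN iffD1, rotated 2]) (auto simp: Fe)
qed


context
  fixes \<phi> :: "(real^'m) \<times> real \<Rightarrow> real"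
  assumes \<phi>: "test_fun (-{0}) \<phi>"
begin

lemma bounds:
  "\<exists>MF MV M\<phi> Mg R. MF \<ge> 0 \<and> MV \<ge> 0 \<and> M\<phi> \<ge> 0 \<and> Mg \<ge> 0 \<and> R \<ge> 0 \<and>
     (\<forall>x\<in>closure {x. \<phi> x \<noteq> 0} - Lline. \<bar>F x\<bar> \<le> MF \<and> norm (V x) \<le> MV) \<and>
     (\<forall>x. \<bar>\<phi> x\<bar> \<le> M\<phi> \<and> norm (hgrad B \<phi> x) \<le> Mg) \<and>
     (\<forall>x\<in>closure {x. \<phi> x \<noteq> 0}. norm x \<le> R)"
proof -
  define K where "K = closure {x. \<phi> x \<noteq> 0}"
  note tf = test_fun_facts[OF \<phi>, folded K_def]
  obtain MF where MF: "\<forall>x\<in>K-Lline. \<bar>F x\<bar> \<le> MF" using Fb[OF tf(1,2)] by blast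
  obtain MV where MV: "\<forall>x\<in>K-Lline. norm (V x) \<le> MV" using Vb[OF tf(1,2)] by blast
  obtain M\<phi> where M\<phi>: "\<And>x. \<bar>\<phi> x\<bar> \<le> M\<phi>" using cont_compact_bounded[OF tf(7) tf(1) tf(5)] by blast
  have hg: "hgrad B \<phi> x = (\<chi> i. frechet_derivative \<phi> (at x) (axis i 1, 0) + 1/2 * (B *v fst x) $ i * frechet_derivative \<phi> (at x) (0, 1))" for x
    by (rule hgrad_eq[OF tf(3)])
  have hgc: "continuous_on UNIV (\<lambda>x. norm (hgrad B \<phi> x))"
    unfolding hg by (intro continuous_intros continuous_on_vec_lambda tf(4) Bz_cont)
  have hg0: "norm (hgrad B \<phi> x) = 0" if "x \<notin> K" for x
    unfolding hg using tf(6)[OF that] by (simp add: vec_eq_iff)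
  obtain Mg where Mg: "\<And>x. \<bar>norm (hgrad B \<phi> x)\<bar> \<le> Mg" using cont_compact_bounded[OF hgc tf(1) hg0] by blast
  obtain R where R: "\<forall>x\<in>K. norm x \<le> R" using compact_imp_bounded[OF tf(1)] bounded_iff by blast
  show ?thesis
    apply (rule exI[of _ "max MF 0"], rule exI[of _ "max MV 0"], rule exI[of _ "max M\<phi> 0"],
        rule exI[of _ "max Mg 0"], rule exI[of _ "max R 0"])
    using MF MV M\<phi> Mg R unfolding K_def by (auto intro: le_max_iff_disj[THEN iffD2])
qed


lemma step:
  assumes r: "r > 0"
  shows "integrable lebesgue (\<lambda>x. F x * (\<phi> x * cut r x)) \<and>
         integrable lebesgue (\<lambda>x. cut r x * (V x \<bullet> hgrad B \<phi> x)) \<and>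
         integrable lebesgue (\<lambda>x. \<phi> x * (V x \<bullet> cutG r x)) \<and>
         integral\<^sup>L lebesgue (\<lambda>x. F x * (\<phi> x * cut r x)) + integral\<^sup>L lebesgue (\<lambda>x. cut r x * (V x \<bullet> hgrad B \<phi> x))
          + integral\<^sup>L lebesgue (\<lambda>x. \<phi> x * (V x \<bullet> cutG r x)) = 0"
proof -
  define K where "K = closure {x. \<phi> x \<noteq> 0}"
  note tf = test_fun_facts[OF \<phi>, folded K_def]
  obtain MF MV M\<phi> Mg R where MM: "MF \<ge> 0" "MV \<ge> 0" "M\<phi> \<ge> 0" "Mg \<ge> 0" "R \<ge> 0"
     "\<And>x. x \<in> K - Lline \<Longrightarrow> \<bar>F x\<bar> \<le> MF" "\<And>x. x \<in> K - Lline \<Longrightarrow> norm (V x) \<le> MV"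
     "\<And>x. \<bar>\<phi> x\<bar> \<le> M\<phi>" "\<And>x. norm (hgrad B \<phi> x) \<le> Mg" "\<And>x. x \<in> K \<Longrightarrow> norm x \<le> R"
    using bounds unfolding K_def by blast
  define D\<phi> where "D\<phi> x = frechet_derivative \<phi> (at x)" for x
  have \<phi>der: "(\<phi> has_derivative D\<phi> x) (at x)" for x unfolding D\<phi>_def by (rule tf(3))
  have D\<phi>c: "continuous_on UNIV (\<lambda>x. D\<phi> x w)" for w unfolding D\<phi>_def by (rule tf(4))
  have hg: "hgrad B \<phi> x = (\<chi> i. D\<phi> x (axis i 1, 0) + 1/2 * (B *v fst x) $ i * D\<phi> x (0, 1))" for x
    by (rule hgrad_eq[OF \<phi>der])
  define \<Phi> where "\<Phi> x = \<phi> x * cut r x" for x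
  define D\<Phi> where "D\<Phi> x w = D\<phi> x w * cut r x + \<phi> x * (cutG r x \<bullet> fst w)" for x w
  have \<Phi>der: "(\<Phi> has_derivative D\<Phi> x) (at x)" for x
    unfolding \<Phi>_def[abs_def]
    by (rule has_derivative_eq_rhs[OF has_derivative_mult[OF \<phi>der cut_deriv[OF r]]])
      (auto simp: D\<Phi>_def fun_eq_iff algebra_simps)
  have \<Phi>c: "continuous_on UNIV \<Phi>" unfolding \<Phi>_def[abs_def] by (intro continuous_intros tf(7) cut_cont r)
  have D\<Phi>c: "continuous_on UNIV (\<lambda>x. D\<Phi> x w)" for w unfolding D\<Phi>_def
    by (intro continuous_intros tf(7) cut_cont cutG_cont r D\<phi>c)
  define U where "U = {x :: (real^'m) \<times> real. norm (fst x) < r}"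
  have Uo: "open U" unfolding U_def by (intro open_Collect_less continuous_intros)
  have LU: "Lline \<subseteq> U" using r by (auto simp: U_def Lline_def)
  have small: "\<Phi> x = 0" "D\<Phi> x w = 0" if "x \<in> U" for x w
    using that cut_small[OF r, of x] by (auto simp: U_def \<Phi>_def D\<Phi>_def)
  have outK: "\<Phi> x = 0" "D\<Phi> x w = 0" if "x \<notin> K" for x w
    using that tf(5,6)[OF that] by (auto simp: \<Phi>_def D\<Phi>_def D\<phi>_def)
  have cover: "-Lline \<union> U = UNIV" using LU by auto
  define g where "g i x = V x $ i * \<Phi> x" for i x
  define Dg where "Dg i x w = (if x \<in> Lline then 0 else DV i x w * \<Phi> x + V x $ i * D\<Phi> x w)" for i x w
  have gder: "(g i has_derivative Dg i x) (at x)" for i x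
  proof (cases "x \<in> Lline")
    case True
    have "(g i has_derivative (\<lambda>_. 0)) (at x)"
      by (rule deriv_zero_outside[OF Uo]) (use True LU small in \<open>auto simp: g_def\<close>)
    moreover have "Dg i x = (\<lambda>_. 0)" using True by (simp add: Dg_def fun_eq_iff)
    ultimately show ?thesis by simp
  next
    case False
    show ?thesis unfolding g_def[abs_def]
      by (rule has_derivative_eq_rhs[OF has_derivative_mult[OF DV[OF False] \<Phi>der]])
        (use False in \<open>auto simp: Dg_def fun_eq_iff algebra_simps\<close>)
  qed
  have Dgc: "continuous_on UNIV (\<lambda>x. Dg i x w)" for i w
  proof -
    have "continuous_on (-Lline \<union> U) (\<lambda>x. Dg i x w)"
    proof (rule continuous_on_open_Un[OF Lline_open Uo])
      have "continuous_on (-Lline) (\<lambda>x. DV i x w * \<Phi> x + V x $ i * D\<Phi> x w)"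
        by (intro continuous_intros DVc Vi_cont continuous_on_subset[OF \<Phi>c] continuous_on_subset[OF D\<Phi>c]) auto
      then show "continuous_on (-Lline) (\<lambda>x. Dg i x w)"
        by (rule continuous_on_cong[THEN iffD1, rotated 2]) (auto simp: Dg_def)
      have "continuous_on U (\<lambda>x. 0::real)" by simp
      then show "continuous_on U (\<lambda>x. Dg i x w)"
        by (rule continuous_on_cong[THEN iffD1, rotated 2]) (auto simp: Dg_def small)
    qed
    then show ?thesis using cover by simp
  qed
  have gK: "g i x = 0" "Dg i x w = 0" if "x \<notin> K" for i x w
    using outK[OF that] by (auto simp: g_def Dg_def)
  have I1: "integrable lebesgue (\<lambda>x. Dg i x (axis i 1, 0)) \<and> integral\<^sup>L lebesgue (\<lambda>x. Dg i x (axis i 1, 0)) = 0" for i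
    by (rule ibp0[OF gder Dgc tf(1)]) (use gK in auto)
  define h where "h i x = 1/2 * (B *v fst x) $ i * g i x" for i x
  define Dh where "Dh i x w = 1/2 * (B *v fst w) $ i * g i x + 1/2 * (B *v fst x) $ i * Dg i x w" for i x w
  have hder: "(h i has_derivative Dh i x) (at x)" for i x
    unfolding h_def[abs_def]
    by (rule has_derivative_eq_rhs[OF has_derivative_mult[OF has_derivative_mult[OF has_derivative_const Bz_deriv] gder]])
      (auto simp: Dh_def fun_eq_iff algebra_simps)
  have Dhet: "Dh i x (0, 1) = 1/2 * (B *v fst x) $ i * Dg i x (0, 1)" for i x
    by (simp add: Dh_def)
  have Dhc: "continuous_on UNIV (\<lambda>x. Dh i x (0, 1))" for i
    unfolding Dhet by (intro continuous_intros Bz_cont Dgc)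
  have hK: "h i x = 0" "Dh i x (0, 1) = 0" if "x \<notin> K" for i x
    using gK[OF that] by (auto simp: h_def Dhet)
  have I2: "integrable lebesgue (\<lambda>x. Dh i x (0, 1)) \<and> integral\<^sup>L lebesgue (\<lambda>x. Dh i x (0, 1)) = 0" for i
    by (rule ibp0[OF hder Dhc tf(1)]) (use hK in auto)
  define S where "S x = (\<Sum>i\<in>UNIV. Dg i x (axis i 1, 0) + Dh i x (0, 1))" for x
  have Sint: "integrable lebesgue S" unfolding S_def[abs_def] using I1 I2 by auto
  have S0: "integral\<^sup>L lebesgue S = 0"
    unfolding S_def[abs_def] using I1 I2 by (simp add: Bochner_Integration.integral_sum)
  have Sx: "S x = F x * (\<phi> x * cut r x) + cut r x * (V x \<bullet> hgrad B \<phi> x) + \<phi> x * (V x \<bullet> cutG r x)" for x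
  proof (cases "x \<in> Lline")
    case True
    then have "norm (fst x) \<le> r" using r by (simp add: Lline_def)
    then have c0: "cut r x = 0" "cutG r x = 0" using cut_small[OF r] by blast+
    have "S x = 0" using True by (simp add: S_def Dg_def Dh_def Lline_def)
    then show ?thesis using c0 by simp
  next
    case False
    have hgi: "hgrad B \<phi> x $ i = D\<phi> x (axis i 1, 0) + 1/2 * (B *v fst x) $ i * D\<phi> x (0, 1)" for i
      using hg by simp
    have trm: "Dg i x (axis i 1, 0) + Dh i x (0, 1) = \<Phi> x * (DV i x (axis i 1, 0) + 1/2 * (B *v fst x) $ i * DV i x (0,1))
        + cut r x * (V x $ i * hgrad B \<phi> x $ i) + \<phi> x * (V x $ i * cutG r x $ i)" for i
      using False by (simp add: Dg_def Dhet D\<Phi>_def hgi inner_axis \<Phi>_def algebra_simps)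
    have "S x = (\<Sum>i\<in>UNIV. \<Phi> x * (DV i x (axis i 1, 0) + 1/2 * (B *v fst x) $ i * DV i x (0,1))
        + cut r x * (V x $ i * hgrad B \<phi> x $ i) + \<phi> x * (V x $ i * cutG r x $ i))"
      unfolding S_def using trm by simp
    also have "\<dots> = \<Phi> x * (\<Sum>i\<in>UNIV. DV i x (axis i 1, 0) + 1/2 * (B *v fst x) $ i * DV i x (0,1))
        + cut r x * (\<Sum>i\<in>UNIV. V x $ i * hgrad B \<phi> x $ i) + \<phi> x * (\<Sum>i\<in>UNIV. V x $ i * cutG r x $ i)"
      unfolding sum_distrib_left by (simp only: sum.distrib)
    also have "\<dots> = \<Phi> x * F x + cut r x * (V x \<bullet> hgrad B \<phi> x) + \<phi> x * (V x \<bullet> cutG r x)"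
      by (simp only: Fe[OF False] inner_vec_def inner_real_def)
    finally show ?thesis by (simp add: \<Phi>_def algebra_simps)
  qed
  have cL: "cut r x = 0" "cutG r x = 0" if "x \<in> Lline" for x
    using that r cut_small[OF r, of x] by (simp_all add: Lline_def)
  have Ai: "integrable lebesgue (\<lambda>x. F x * (\<phi> x * cut r x))"
  proof (rule integrable_bounded_compact[OF meas_offL tf(1)])
    show "continuous_on (- Lline) (\<lambda>x. F x * (\<phi> x * cut r x))"
      by (intro continuous_intros F_cont continuous_on_subset[OF tf(7)] continuous_on_subset[OF cut_cont[OF r]]) auto
    show "F x * (\<phi> x * cut r x) = 0" if "x \<notin> K" for x using tf(5)[OF that] by simp
    show "\<bar>F x * (\<phi> x * cut r x)\<bar> \<le> MF * M\<phi>" for x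
    proof (cases "x \<in> K - Lline")
      case True
      have "\<bar>F x * (\<phi> x * cut r x)\<bar> = \<bar>F x\<bar> * (\<bar>\<phi> x\<bar> * \<bar>cut r x\<bar>)" by (simp add: abs_mult)
      also have "\<dots> \<le> MF * (M\<phi> * 1)"
        using True MM cut_range[of r x] by (intro mult_mono) auto
      finally show ?thesis by simp
    next
      case False
      then have z: "F x * (\<phi> x * cut r x) = 0" using tf(5)[of x] cL(1)[of x] by auto
      show ?thesis unfolding z using MM(1,3) by simp
    qed
  qed
  have Bi: "integrable lebesgue (\<lambda>x. cut r x * (V x \<bullet> hgrad B \<phi> x))"
  proof (rule integrable_bounded_compact[OF meas_offL tf(1)])
    have hgc: "continuous_on UNIV (hgrad B \<phi>)"
      unfolding hg by (intro continuous_intros continuous_on_vec_lambda D\<phi>c Bz_cont)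
    show "continuous_on (- Lline) (\<lambda>x. cut r x * (V x \<bullet> hgrad B \<phi> x))"
      by (intro continuous_intros V_cont continuous_on_subset[OF hgc] continuous_on_subset[OF cut_cont[OF r]]) auto
    show "cut r x * (V x \<bullet> hgrad B \<phi> x) = 0" if "x \<notin> K" for x
      using tf(6)[OF that] by (simp add: hgrad_def dz_def dt_def vec_eq_iff inner_vec_def)
    show "\<bar>cut r x * (V x \<bullet> hgrad B \<phi> x)\<bar> \<le> MV * Mg" for x
    proof (cases "x \<in> K - Lline")
      case True
      have "\<bar>cut r x * (V x \<bullet> hgrad B \<phi> x)\<bar> \<le> 1 * (norm (V x) * norm (hgrad B \<phi> x))"
        unfolding abs_mult using cut_range[of r x] Cauchy_Schwarz_ineq2[of "V x" "hgrad B \<phi> x"]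
        by (intro mult_mono) auto
      also have "\<dots> \<le> 1 * (MV * Mg)"
        using True MM by (intro mult_mono) auto
      finally show ?thesis by simp
    next
      case False
      then have "x \<notin> K \<or> x \<in> Lline" by blast
      then have z: "cut r x * (V x \<bullet> hgrad B \<phi> x) = 0"
        using tf(6)[of x] cL(1)[of x] by (auto simp: hgrad_def dz_def dt_def inner_vec_def)
      show ?thesis unfolding z using MM(2,4) by simp
    qed
  qed
  have Ci: "integrable lebesgue (\<lambda>x. \<phi> x * (V x \<bullet> cutG r x))"
  proof (rule integrable_bounded_compact[OF meas_offL tf(1)])
    show "continuous_on (- Lline) (\<lambda>x. \<phi> x * (V x \<bullet> cutG r x))"
      by (intro continuous_intros V_cont continuous_on_subset[OF tf(7)] continuous_on_subset[OF cutG_cont[OF r]]) auto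
    show "\<phi> x * (V x \<bullet> cutG r x) = 0" if "x \<notin> K" for x using tf(5)[OF that] by simp
    show "\<bar>\<phi> x * (V x \<bullet> cutG r x)\<bar> \<le> M\<phi> * (MV * (8 / r))" for x
    proof (cases "x \<in> K - Lline")
      case True
      have "\<bar>\<phi> x * (V x \<bullet> cutG r x)\<bar> \<le> \<bar>\<phi> x\<bar> * (norm (V x) * norm (cutG r x))"
        unfolding abs_mult using Cauchy_Schwarz_ineq2[of "V x" "cutG r x"]
        by (intro mult_mono) auto
      also have "\<dots> \<le> M\<phi> * (MV * (8 / r))"
        using True MM cutG_bound[OF r, of x] by (intro mult_mono) auto
      finally show ?thesis .
    next
      case False
      then have z: "\<phi> x * (V x \<bullet> cutG r x) = 0" using tf(5)[of x] cL(2)[of x] by auto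
      show ?thesis unfolding z using MM(2,3) r by simp
    qed
  qed
  have "S = (\<lambda>x. F x * (\<phi> x * cut r x) + cut r x * (V x \<bullet> hgrad B \<phi> x) + \<phi> x * (V x \<bullet> cutG r x))"
    using Sx by auto
  then have "integral\<^sup>L lebesgue (\<lambda>x. F x * (\<phi> x * cut r x) + cut r x * (V x \<bullet> hgrad B \<phi> x) + \<phi> x * (V x \<bullet> cutG r x)) = 0"
    using S0 by simp
  then show ?thesis using Ai Bi Ci
    by (simp add: Bochner_Integration.integral_add)
qed

end

end


lemma box_measure:
  fixes r R :: real
  assumes "r \<ge> 0" "R \<ge> 0"
  shows "measure lebesgue (cbox ((\<chi> i. - (2 * r), - R) :: (real^'m::finite) \<times> real) (\<chi> i. 2 * r, R))
          = (4 * r) ^ CARD('m) * (2 * R)"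
proof -
  have "measure lebesgue (cbox ((\<chi> i. - (2 * r), - R) :: (real^'m::finite) \<times> real) (\<chi> i. 2 * r, R))
     = measure lborel (cbox ((\<chi> i. - (2 * r), - R) :: (real^'m::finite) \<times> real) (\<chi> i. 2 * r, R))"
    by (rule measure_completion) simp
  also have "\<dots> = measure lborel (cbox ((\<chi> i. - (2 * r)) :: real^'m) (\<chi> i. 2 * r)) * measure lborel (cbox (- R) R)"
    by (rule content_Pair)
  also have "measure lborel (cbox ((\<chi> i. - (2 * r)) :: real^'m) (\<chi> i. 2 * r)) = (\<Prod>i\<in>(UNIV::'m set). 4 * r)"
  proof -
    have "cbox ((\<chi> i. - (2 * r)) :: real^'m) (\<chi> i. 2 * r) \<noteq> {}"
    proof -
      have "0 \<in> cbox ((\<chi> i. - (2 * r)) :: real^'m) (\<chi> i. 2 * r)" using assms by (simp add: mem_box_cart)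
      then show ?thesis by blast
    qed
    then show ?thesis by (simp add: content_cbox_cart)
  qed
  also have "measure lborel (cbox (- R) R) = 2 * R" using assms by simp
  finally show ?thesis by simp
qed

lemma eventually_small:
  assumes "c > 0"
  shows "eventually (\<lambda>k. 2 * (1 / real (Suc k)) \<le> c) sequentially"
proof -
  have "(\<lambda>k. 2 * (1 / real (Suc k))) \<longlonglongrightarrow> 2 * 0"
    by (intro tendsto_mult tendsto_const) (use LIMSEQ_inverse_real_of_nat in \<open>simp add: inverse_eq_divide\<close>)
  then have "eventually (\<lambda>k. 2 * (1 / real (Suc k)) < c) sequentially"
    using assms by (intro order_tendstoD) auto
  then show ?thesis by eventually_elim simp
qed


context gdiv
begin

context
  fixes \<phi> :: "(real^'m) \<times> real \<Rightarrow> real"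
  assumes \<phi>: "test_fun (-{0}) \<phi>"
begin

lemma limit:
  "integrable lebesgue (\<lambda>x. V x \<bullet> hgrad B \<phi> x) \<and> integrable lebesgue (\<lambda>x. F x * \<phi> x) \<and>
   - (\<integral>x. V x \<bullet> hgrad B \<phi> x \<partial>lebesgue) = (\<integral>x. F x * \<phi> x \<partial>lebesgue)"
proof -
  define K where "K = closure {x. \<phi> x \<noteq> 0}"
  note tf = test_fun_facts[OF \<phi>, folded K_def]
  obtain MF MV M\<phi> Mg R where MM: "MF \<ge> 0" "MV \<ge> 0" "M\<phi> \<ge> 0" "Mg \<ge> 0" "R \<ge> 0"
     "\<And>x. x \<in> K - Lline \<Longrightarrow> \<bar>F x\<bar> \<le> MF" "\<And>x. x \<in> K - Lline \<Longrightarrow> norm (V x) \<le> MV"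
     "\<And>x. \<bar>\<phi> x\<bar> \<le> M\<phi>" "\<And>x. norm (hgrad B \<phi> x) \<le> Mg" "\<And>x. x \<in> K \<Longrightarrow> norm x \<le> R"
    using bounds[OF \<phi>] unfolding K_def by blast
  have hg: "hgrad B \<phi> x = (\<chi> i. frechet_derivative \<phi> (at x) (axis i 1, 0) + 1/2 * (B *v fst x) $ i * frechet_derivative \<phi> (at x) (0, 1))" for x
    by (rule hgrad_eq[OF tf(3)])
  have hgc: "continuous_on UNIV (hgrad B \<phi>)"
    unfolding hg by (intro continuous_intros continuous_on_vec_lambda tf(4) Bz_cont)
  have hg0: "hgrad B \<phi> x = 0" if "x \<notin> K" for x
    unfolding hg using tf(6)[OF that] by (simp add: vec_eq_iff)
  define rk where "rk k = 1 / real (Suc k)" for k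
  have rk: "rk k > 0" "rk k \<le> 1" for k by (auto simp: rk_def)
  define A where "A k x = F x * (\<phi> x * cut (rk k) x)" for k x
  define Bf where "Bf k x = cut (rk k) x * (V x \<bullet> hgrad B \<phi> x)" for k x
  define C where "C k x = \<phi> x * (V x \<bullet> cutG (rk k) x)" for k x
  have st: "integral\<^sup>L lebesgue (A k) + integral\<^sup>L lebesgue (Bf k) + integral\<^sup>L lebesgue (C k) = 0"
    and Ci: "integrable lebesgue (C k)" for k
    using step[OF \<phi> rk(1)[of k]] unfolding A_def[abs_def] Bf_def[abs_def] C_def[abs_def] by auto
  have cL: "cut (rk k) x = 0" "cutG (rk k) x = 0" if "x \<in> Lline" for k x
    using that cut_small[OF rk(1)[of k], of x] rk(1)[of k] by (simp_all add: Lline_def)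
  have conv: "eventually (\<lambda>k. cut (rk k) x = 1) sequentially" if "x \<notin> Lline" for x
  proof -
    have "norm (fst x) > 0" using that by (simp add: Lline_def)
    from eventually_small[OF this] show ?thesis
    proof eventually_elim
      case (elim k)
      then have "2 * rk k \<le> norm (fst x)" by (simp add: rk_def)
      then show ?case using cut_big(1)[OF rk(1)[of k]] by blast
    qed
  qed
  have Fphi_meas: "(\<lambda>x. F x * \<phi> x) \<in> borel_measurable lebesgue"
    by (intro meas_offL continuous_intros F_cont continuous_on_subset[OF tf(7)]) auto
  have A_meas: "A k \<in> borel_measurable lebesgue" for k
    unfolding A_def by (intro meas_offL continuous_intros F_cont continuous_on_subset[OF tf(7)]
        continuous_on_subset[OF cut_cont[OF rk(1)]]) auto
  have Abound: "norm (A k x) \<le> MF * M\<phi> * indicator K x" for k x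
  proof (cases "x \<in> K - Lline")
    case True
    have "\<bar>A k x\<bar> = \<bar>F x\<bar> * (\<bar>\<phi> x\<bar> * \<bar>cut (rk k) x\<bar>)" by (simp add: A_def abs_mult)
    also have "\<dots> \<le> MF * (M\<phi> * 1)"
      using True MM cut_range[of "rk k" x] by (intro mult_mono) auto
    finally show ?thesis using True by simp
  next
    case False
    then have z: "A k x = 0" using tf(5)[of x] cL(1)[of x k] by (auto simp: A_def)
    show ?thesis unfolding z using MM(1,3) by simp
  qed
  have LA: "(\<lambda>k. integral\<^sup>L lebesgue (A k)) \<longlonglongrightarrow> integral\<^sup>L lebesgue (\<lambda>x. F x * \<phi> x)"
   and IA: "integrable lebesgue (\<lambda>x. F x * \<phi> x)"
  proof -
    have w: "integrable lebesgue (\<lambda>x. MF * M\<phi> * indicator K x)"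
      using lmeasurable_compact[OF tf(1)] by (auto simp: fmeasurable_def)
    have lim: "AE x in lebesgue. (\<lambda>k. A k x) \<longlonglongrightarrow> F x * \<phi> x"
      using AE_not_in[OF Lline_null]
    proof eventually_elim
      case (elim x)
      show ?case using conv[OF elim] by (intro tendsto_eventually) (auto elim: eventually_mono simp: A_def)
    qed
    have b: "AE x in lebesgue. norm (A k x) \<le> MF * M\<phi> * indicator K x" for k
      using Abound by (intro AE_I2) auto
    show "(\<lambda>k. integral\<^sup>L lebesgue (A k)) \<longlonglongrightarrow> integral\<^sup>L lebesgue (\<lambda>x. F x * \<phi> x)"
      by (rule integral_dominated_convergence[OF Fphi_meas A_meas w lim b])
    show "integrable lebesgue (\<lambda>x. F x * \<phi> x)"
      by (rule integrable_dominated_convergence[OF Fphi_meas A_meas w lim b])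
  qed
  have Vh_meas: "(\<lambda>x. V x \<bullet> hgrad B \<phi> x) \<in> borel_measurable lebesgue"
    by (intro meas_offL continuous_intros V_cont continuous_on_subset[OF hgc]) auto
  have B_meas: "Bf k \<in> borel_measurable lebesgue" for k
    unfolding Bf_def by (intro meas_offL continuous_intros V_cont continuous_on_subset[OF hgc]
        continuous_on_subset[OF cut_cont[OF rk(1)]]) auto
  have Bbound: "norm (Bf k x) \<le> MV * Mg * indicator K x" for k x
  proof (cases "x \<in> K - Lline")
    case True
    have "\<bar>Bf k x\<bar> \<le> 1 * (norm (V x) * norm (hgrad B \<phi> x))"
      unfolding Bf_def abs_mult using cut_range[of "rk k" x] Cauchy_Schwarz_ineq2[of "V x" "hgrad B \<phi> x"]
      by (intro mult_mono) auto
    also have "\<dots> \<le> 1 * (MV * Mg)"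
      using True MM by (intro mult_mono) auto
    finally show ?thesis using True by simp
  next
    case False
    then have z: "Bf k x = 0" using hg0[of x] cL(1)[of x k] by (auto simp: Bf_def)
    show ?thesis unfolding z using MM(2,4) by simp
  qed
  have LB: "(\<lambda>k. integral\<^sup>L lebesgue (Bf k)) \<longlonglongrightarrow> integral\<^sup>L lebesgue (\<lambda>x. V x \<bullet> hgrad B \<phi> x)"
   and IB: "integrable lebesgue (\<lambda>x. V x \<bullet> hgrad B \<phi> x)"
  proof -
    have w: "integrable lebesgue (\<lambda>x. MV * Mg * indicator K x)"
      using lmeasurable_compact[OF tf(1)] by (auto simp: fmeasurable_def)
    have lim: "AE x in lebesgue. (\<lambda>k. Bf k x) \<longlonglongrightarrow> V x \<bullet> hgrad B \<phi> x"
      using AE_not_in[OF Lline_null]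
    proof eventually_elim
      case (elim x)
      show ?case using conv[OF elim] by (intro tendsto_eventually) (auto elim: eventually_mono simp: Bf_def)
    qed
    have b: "AE x in lebesgue. norm (Bf k x) \<le> MV * Mg * indicator K x" for k
      using Bbound by (intro AE_I2) auto
    show "(\<lambda>k. integral\<^sup>L lebesgue (Bf k)) \<longlonglongrightarrow> integral\<^sup>L lebesgue (\<lambda>x. V x \<bullet> hgrad B \<phi> x)"
      by (rule integral_dominated_convergence[OF Vh_meas B_meas w lim b])
    show "integrable lebesgue (\<lambda>x. V x \<bullet> hgrad B \<phi> x)"
      by (rule integrable_dominated_convergence[OF Vh_meas B_meas w lim b])
  qed
  define c where "c = M\<phi> * MV * 8"
  have c0: "c \<ge> 0" using MM by (simp add: c_def)
  define Bx where "Bx k = cbox ((\<chi> i. - (2 * rk k), - R) :: (real^'m) \<times> real) (\<chi> i. 2 * rk k, R)" for k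
  have Cbound: "\<bar>C k x\<bar> \<le> c / rk k * indicator (Bx k) x" for k x
  proof (cases "x \<in> K - Lline \<and> cutG (rk k) x \<noteq> 0")
    case True
    have "\<bar>C k x\<bar> \<le> \<bar>\<phi> x\<bar> * (norm (V x) * norm (cutG (rk k) x))"
      unfolding C_def abs_mult using Cauchy_Schwarz_ineq2[of "V x" "cutG (rk k) x"]
      by (intro mult_mono) auto
    also have "\<dots> \<le> M\<phi> * (MV * (8 / rk k))"
      using True MM cutG_bound[OF rk(1), of k x] by (intro mult_mono) auto
    also have "\<dots> = c / rk k" by (simp add: c_def)
    finally have 1: "\<bar>C k x\<bar> \<le> c / rk k" .
    have n: "norm (fst x) < 2 * rk k" using cutG_support[OF rk(1)] True by blast
    have "x \<in> Bx k"
    proof -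
      have "fst x \<in> cbox ((\<chi> i. - (2 * rk k)) :: real^'m) (\<chi> i. 2 * rk k)"
        unfolding mem_box_cart
      proof (intro allI)
        fix i
        have "\<bar>fst x $ i\<bar> \<le> norm (fst x)" by (rule component_le_norm_cart)
        then show "(\<chi> i. - (2 * rk k)) $ i \<le> fst x $ i \<and> fst x $ i \<le> (\<chi> i. 2 * rk k) $ i"
          using n by (simp add: abs_le_iff)
      qed
      moreover have "snd x \<in> cbox (- R) R"
      proof -
        have "norm (snd x) \<le> norm x" by (metis norm_snd_le prod.collapse)
        then have "\<bar>snd x\<bar> \<le> R" using MM(10)[of x] True by simp
        then show ?thesis by (simp add: abs_le_iff)
      qed
      ultimately show ?thesis unfolding Bx_def cbox_Pair_eq by (cases x) auto
    qed
    then show ?thesis using 1 by simp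
  next
    case False
    then have z: "C k x = 0" using tf(5)[of x] cL(2)[of x k] by (auto simp: C_def)
    show ?thesis unfolding z using c0 rk(1)[of k] by simp
  qed
  have Cint: "\<bar>integral\<^sup>L lebesgue (C k)\<bar> \<le> c * 4 ^ CARD('m) * (2 * R) * rk k" for k
  proof -
    have ib: "integrable lebesgue (\<lambda>x. c / rk k * indicator (Bx k) x)"
    proof -
      have "Bx k \<in> lmeasurable" unfolding Bx_def by (rule lmeasurable_cbox)
      then have "integrable lebesgue (indicator (Bx k) :: _ \<Rightarrow> real)" by (auto simp: fmeasurable_def)
      then show ?thesis by (rule integrable_mult_right)
    qed
    have "\<bar>integral\<^sup>L lebesgue (C k)\<bar> \<le> integral\<^sup>L lebesgue (\<lambda>x. \<bar>C k x\<bar>)"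
      by (rule integral_abs_bound)
    also have "\<dots> \<le> integral\<^sup>L lebesgue (\<lambda>x. c / rk k * indicator (Bx k) x)"
      by (rule integral_mono[OF integrable_abs[OF Ci] ib Cbound])
    also have "\<dots> = c / rk k * measure lebesgue (Bx k)"
      unfolding Bx_def by simp
    also have "\<dots> = c / rk k * ((4 * rk k) ^ CARD('m) * (2 * R))"
      unfolding Bx_def using box_measure[of "rk k" R, where 'm='m] rk(1)[of k] MM(5) by simp
    also have "\<dots> = c * 4 ^ CARD('m) * (2 * R) * rk k ^ (CARD('m) - 1)"
    proof -
      have e: "CARD('m) = Suc (CARD('m) - 1)" using m2 by simp
      have "rk k ^ CARD('m) = rk k * rk k ^ (CARD('m) - 1)"
        by (subst e) (simp only: power_Suc)
      then show ?thesis using rk(1)[of k] by (simp add: power_mult_distrib field_simps)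
    qed
    also have "\<dots> \<le> c * 4 ^ CARD('m) * (2 * R) * rk k"
    proof -
      have "rk k ^ (CARD('m) - 1) \<le> rk k ^ 1"
        using rk[of k] m2 by (intro power_decreasing) auto
      then show ?thesis using c0 MM(5) by (intro mult_left_mono) auto
    qed
    finally show ?thesis .
  qed
  have LC: "(\<lambda>k. integral\<^sup>L lebesgue (C k)) \<longlonglongrightarrow> 0"
  proof (rule Lim_null_comparison)
    show "\<forall>\<^sub>F k in sequentially. norm (integral\<^sup>L lebesgue (C k)) \<le> c * 4 ^ CARD('m) * (2 * R) * rk k"
      using Cint by simp
    have "rk \<longlonglongrightarrow> 0" unfolding rk_def using LIMSEQ_inverse_real_of_nat by (simp add: inverse_eq_divide)
    then show "(\<lambda>k. c * 4 ^ CARD('m) * (2 * R) * rk k) \<longlonglongrightarrow> 0"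
      by (intro tendsto_mult_right_zero)
  qed
  have "(\<lambda>k. integral\<^sup>L lebesgue (A k) + integral\<^sup>L lebesgue (Bf k) + integral\<^sup>L lebesgue (C k))
     \<longlonglongrightarrow> integral\<^sup>L lebesgue (\<lambda>x. F x * \<phi> x) + integral\<^sup>L lebesgue (\<lambda>x. V x \<bullet> hgrad B \<phi> x) + 0"
    by (intro tendsto_add LA LB LC)
  then have "integral\<^sup>L lebesgue (\<lambda>x. F x * \<phi> x) + integral\<^sup>L lebesgue (\<lambda>x. V x \<bullet> hgrad B \<phi> x) + 0 = 0"
    using st by (simp add: LIMSEQ_const_iff)
  then show ?thesis using IA IB by simp
qed

end

theorem gdiv_main: "hdiv_eq B (-{0}) V F"
  unfolding hdiv_eq_def using limit by blast

end


lemma skew_inner: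
  fixes B :: "real^'m::finite^'m"
  assumes "transpose B = - B"
  shows "(B *v u) \<bullet> v = - (u \<bullet> (B *v v))"
proof -
  have "u \<bullet> (B *v v) = (u v* B) \<bullet> v" by (simp add: dot_lmul_matrix)
  also have "u v* B = transpose B *v u" by (metis transpose_transpose vector_transpose_matrix)
  also have "\<dots> = - (B *v u)" using assms by (simp add: matrix_vector_mult_def vec_eq_iff sum_negf)
  finally show ?thesis by simp
qed

lemma inv_facts:
  fixes B :: "real^'m::finite^'m"
  assumes "\<forall>x. B *v x = 0 \<longrightarrow> x = 0"
  shows "matrix_inv B ** B = mat 1" "B ** matrix_inv B = mat 1"
proof -
  obtain A where A: "A ** B = mat 1" using matrix_left_invertible_ker[of B] assms by blast
  then have "B ** A = mat 1" using matrix_left_right_inverse by blast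
  with A have "\<exists>A'. B ** A' = mat 1 \<and> A' ** B = mat 1" by blast
  then have "B ** matrix_inv B = mat 1 \<and> matrix_inv B ** B = mat 1"
    unfolding matrix_inv_def by (rule someI_ex)
  then show "matrix_inv B ** B = mat 1" "B ** matrix_inv B = mat 1" by auto
qed

locale hd =
  fixes B :: "real^'m::finite^'m" and d :: "(real^'m) \<times> real \<Rightarrow> real" and n :: nat
  assumes card: "CARD('m) = 2 * n"
    and skew: "transpose B = - B"
    and ker: "\<forall>x. B *v x = 0 \<longrightarrow> x = 0"
    and ph: "pos_homogeneous d" and reg: "regular B d"
begin

definition "C = matrix_inv B"
definition "Dd x = frechet_derivative d (at x)"
definition "D2 v x = frechet_derivative (\<lambda>y. Dd y v) (at x)"

lemma CB: "C ** B = mat 1" "B ** C = mat 1" using inv_facts[OF ker] by (auto simp: C_def)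

lemma BC_vec: "B *v (C *v h) = h"
  by (simp add: matrix_vector_mul_assoc CB)

lemma CB_vec: "C *v (B *v h) = h"
  by (simp add: matrix_vector_mul_assoc CB)

lemma Bskew: "(B *v u) \<bullet> v = - (u \<bullet> (B *v v))" by (rule skew_inner[OF skew])

lemma Cskew: "(C *v u) \<bullet> v = - (u \<bullet> (C *v v))"
proof -
  have "(C *v u) \<bullet> v = (C *v u) \<bullet> (B *v (C *v v))" by (simp add: BC_vec)
  also have "\<dots> = - ((B *v (C *v u)) \<bullet> (C *v v))" using Bskew[of "C *v u" "C *v v"] by simp
  also have "\<dots> = - (u \<bullet> (C *v v))" by (simp add: BC_vec)
  finally show ?thesis .
qed

lemma C_entry_skew: "C $ i $ j = - C $ j $ i"
proof -
  have "C $ i $ j = axis i 1 \<bullet> (C *v axis j 1)"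
    by (simp add: matrix_vector_mult_basis column_def inner_axis' )
  also have "\<dots> = - ((C *v axis i 1) \<bullet> axis j 1)" using Cskew[of "axis i 1" "axis j 1"] by simp
  also have "(C *v axis i 1) \<bullet> axis j 1 = C $ j $ i"
    by (simp add: matrix_vector_mult_basis column_def inner_axis)
  finally show ?thesis .
qed

lemma LA2: "(B *v z) \<bullet> (C *v h) = - (z \<bullet> h)"
  using Bskew[of z "C *v h"] by (simp add: BC_vec)

lemma LA3: "h \<bullet> (C *v h) = 0"
proof -
  have "h \<bullet> (C *v h) = - ((C *v h) \<bullet> h)" using Cskew[of h h] by (simp add: inner_commute)
  then show ?thesis by (simp add: inner_commute)
qed

lemma LA4: "(\<Sum>i\<in>UNIV. \<Sum>j\<in>UNIV. C $ i $ j * B $ j $ i) = real CARD('m)"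
proof -
  have "(\<Sum>j\<in>UNIV. C $ i $ j * B $ j $ i) = 1" for i
    using CB(1) by (simp add: vec_eq_iff matrix_matrix_mult_def mat_def)
  then show ?thesis by simp
qed

lemma LA5:
  assumes "\<And>i j. Q i j = Q j i"
  shows "(\<Sum>i\<in>UNIV. \<Sum>j\<in>UNIV. C $ i $ j * Q i j) = 0"
proof -
  let ?S = "(\<Sum>i\<in>UNIV. \<Sum>j\<in>UNIV. C $ i $ j * Q i j)"
  have "?S = (\<Sum>j\<in>UNIV. \<Sum>i\<in>UNIV. C $ i $ j * Q i j)" by (rule sum.swap)
  also have "\<dots> = (\<Sum>j\<in>UNIV. \<Sum>i\<in>UNIV. - (C $ j $ i * Q j i))"
  proof (intro sum.cong refl)
    fix i j
    show "C $ i $ j * Q i j = - (C $ j $ i * Q j i)"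
      using C_entry_skew[of i j] assms[of i j] by simp
  qed
  also have "\<dots> = - ?S" by (simp add: sum_negf)
  finally show ?thesis by simp
qed

end


lemma deriv_invpow:
  assumes "s > 0"
  shows "((\<lambda>s. 1 / s powr c) has_real_derivative (- c / s powr (c + 1))) (at s)"
proof -
  have e: "(\<lambda>s::real. 1 / s powr c) = (\<lambda>s. s powr (- c))" by (simp add: powr_minus_divide)
  have "((\<lambda>s. s powr (- c)) has_real_derivative (- c) * s powr (- c - 1)) (at s)"
    by (rule has_real_derivative_powr[OF assms])
  moreover have "s powr (- c - 1) = 1 / s powr (c + 1)"
  proof -
    have e2: "- c - 1 = - (c + 1)" by simp
    show ?thesis unfolding e2 by (rule powr_minus_divide)
  qed
  ultimately show ?thesis unfolding e by simp
qed

lemma invpow_der: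
  fixes f :: "'a::real_normed_vector \<Rightarrow> real"
  assumes "f x > 0" "(f has_derivative D) (at x)"
  shows "((\<lambda>y. 1 / f y powr c) has_derivative (\<lambda>w. D w * (- c / f x powr (c + 1)))) (at x)"
  by (rule DERIV_compose_FDERIV[OF deriv_invpow[OF assms(1)] assms(2)])

lemma bnd_cont:
  fixes f :: "'a::metric_space \<Rightarrow> real"
  assumes "compact K" "K \<subseteq> S" "continuous_on S f"
  shows "\<exists>M\<ge>0. \<forall>x\<in>K. \<bar>f x\<bar> \<le> M"
proof -
  have "compact (f ` K)" using assms by (meson compact_continuous_image continuous_on_subset)
  then obtain M where "\<forall>y\<in>f ` K. norm y \<le> M" using compact_imp_bounded bounded_iff by metis
  then have "\<forall>x\<in>K. \<bar>f x\<bar> \<le> max M 0" by auto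
  then show ?thesis by (intro exI[of _ "max M 0"]) auto
qed

context hd
begin

lemma C2: "Ck_on (Suc (Suc 0)) (-Lline) d"
  using reg unfolding regular_def by (blast intro: smooth_Ck)

lemma dder: "x \<notin> Lline \<Longrightarrow> (d has_derivative Dd x) (at x)"
  unfolding Dd_def using Ck_SucD1[OF C2, of x] by (simp add: frechet_derivative_works[symmetric])

lemma D2der: "x \<notin> Lline \<Longrightarrow> ((\<lambda>y. Dd y v) has_derivative D2 v x) (at x)"
  unfolding D2_def Dd_def using Ck_SucD1[OF Ck_SucD2[OF C2, of v], of x] by (simp add: frechet_derivative_works[symmetric])

lemma D2c: "continuous_on (-Lline) (\<lambda>x. D2 v x w)"
  unfolding D2_def Dd_def by (rule Ck_0D[OF Ck_SucD2[OF Ck_SucD2[OF C2, of v], of w]])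

lemma Ddc: "continuous_on (-Lline) (\<lambda>x. Dd x v)"
  by (intro continuous_at_imp_continuous_on ballI has_derivative_continuous[OF D2der]) auto

lemma dcont: "continuous_on S d"
  using ph unfolding pos_homogeneous_def by (meson continuous_on_subset top_greatest)

lemma dpos: "x \<noteq> 0 \<Longrightarrow> d x > 0"
  using ph unfolding pos_homogeneous_def by blast

lemma dposL: "x \<notin> Lline \<Longrightarrow> d x > 0"
  by (rule dpos) (auto simp: Lline_def)

lemma sym2: "x \<notin> Lline \<Longrightarrow> D2 v x w = D2 w x v"
proof (rule schwarz[OF Lline_open])
  assume x: "x \<notin> Lline"
  show "x \<in> - Lline" using x by simp
  show "\<And>y. y \<in> - Lline \<Longrightarrow> (d has_derivative Dd y) (at y)" using dder by auto
  show "\<And>y. y \<in> - Lline \<Longrightarrow> ((\<lambda>y. Dd y v) has_derivative D2 v y) (at y)" using D2der by auto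
  show "\<And>y. y \<in> - Lline \<Longrightarrow> ((\<lambda>y. Dd y w) has_derivative D2 w y) (at y)" using D2der by auto
  show "continuous (at x) (\<lambda>y. D2 v y w)"
    using continuous_on_eq_continuous_at[OF Lline_open, THEN iffD1, OF D2c[of v w]] x by simp
  show "continuous (at x) (\<lambda>y. D2 w y v)"
    using continuous_on_eq_continuous_at[OF Lline_open, THEN iffD1, OF D2c[of w v]] x by simp
qed

lemma hgrad_d: "hgrad B d x $ j = Dd x (axis j 1, 0) + 1/2 * (B *v fst x) $ j * Dd x (0, 1)"
  by (simp add: hgrad_def dz_def dt_def Dd_def)

lemma dt_d: "dt d x = Dd x (0, 1)"
  by (simp add: dt_def Dd_def)

lemma bnd_reg:
  assumes "compact K" "K \<subseteq> -{0}"
  shows "\<exists>M\<ge>0. \<forall>x\<in>K - Lline. norm (hgrad B d x) \<le> M \<and> \<bar>dt d x\<bar> \<le> M"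
proof -
  have "bounded (hgrad B d ` (K - Lline))" "bounded (dt d ` (K - Lline))"
    using reg assms unfolding regular_def by blast+
  then obtain M1 M2 where "\<forall>y\<in>hgrad B d ` (K - Lline). norm y \<le> M1" "\<forall>y\<in>dt d ` (K - Lline). norm y \<le> M2"
    unfolding bounded_iff by blast
  then show ?thesis by (intro exI[of _ "max (max M1 M2) 0"]) force
qed

lemma card2: "CARD('m) \<ge> 2"
proof -
  have "CARD('m) > 0" by simp
  then show ?thesis using card by simp
qed

end


lemma fst_comp_deriv: "((\<lambda>y :: (real^'m::finite) \<times> real. fst y $ i) has_derivative (\<lambda>w. fst w $ i)) F"
proof -
  have "bounded_linear (\<lambda>y :: (real^'m::finite) \<times> real. fst y $ i)"
  proof (rule bounded_linear_intro[where K=1])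
    show "norm (fst x $ i) \<le> norm x * 1" for x :: "(real^'m::finite) \<times> real"
    proof -
      have "\<bar>fst x $ i\<bar> \<le> norm (fst x)" by (rule component_le_norm_cart)
      moreover have "norm (fst x) \<le> norm x" by (metis norm_fst_le prod.collapse)
      ultimately show ?thesis by simp
    qed
  qed auto
  then show ?thesis by (rule bounded_linear_imp_has_derivative)
qed

context hd
begin

lemma dpowr_pos: assumes "x \<notin> Lline" shows "d x powr c > 0"
  using dposL[OF assms] by simp

lemma part2:
  fixes b :: real
  shows "hdiv_eq B (-{0}) (\<lambda>x. (1 / d x powr b) *\<^sub>R fst x)
     (\<lambda>x. 2 * real n / d x powr b - b / d x powr (b + 1) * (fst x \<bullet> hgrad B d x))"
proof -
  define DV where "DV i x w = Dd x w * (- b / d x powr (b + 1)) * fst x $ i + 1 / d x powr b * fst w $ i" for i x w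
  have "gdiv B (\<lambda>x. (1 / d x powr b) *\<^sub>R fst x) (\<lambda>x. 2 * real n / d x powr b - b / d x powr (b + 1) * (fst x \<bullet> hgrad B d x)) DV"
  proof (unfold_locales)
    show "2 \<le> CARD('m)" by (rule card2)
  next
    fix i and x :: "(real^'m) \<times> real" assume x: "x \<notin> Lline"
    have "((\<lambda>y. 1 / d y powr b * fst y $ i) has_derivative
           (\<lambda>w. 1 / d x powr b * fst w $ i + Dd x w * (- b / d x powr (b + 1)) * fst x $ i)) (at x)"
      by (rule has_derivative_mult[OF invpow_der[OF dposL[OF x] dder[OF x]] fst_comp_deriv])
    then show "((\<lambda>y. ((1 / d y powr b) *\<^sub>R fst y) $ i) has_derivative DV i x) (at x)"
      unfolding vector_scaleR_component real_scaleR_def by (rule has_derivative_eq_rhs) (auto simp: DV_def fun_eq_iff)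
  next
    fix i v
    have "continuous_on (-Lline) (\<lambda>x. Dd x v * (- b / d x powr (b + 1)) * fst x $ i + 1 / d x powr b * fst v $ i)"
      by (intro continuous_intros Ddc dcont) (auto dest: dposL)
    then show "continuous_on (-Lline) (\<lambda>x. DV i x v)" by (simp add: DV_def)
  next
    fix x :: "(real^'m) \<times> real" assume x: "x \<notin> Lline"
    let ?P = "1 / d x powr b" and ?Q = "- b / d x powr (b + 1)"
    have trm: "DV i x (axis i 1, 0) + 1/2 * (B *v fst x) $ i * DV i x (0, 1) = ?P + ?Q * (fst x $ i * hgrad B d x $ i)" for i
      by (simp add: DV_def hgrad_d algebra_simps)
    have "(\<Sum>i\<in>UNIV. DV i x (axis i 1, 0) + 1/2 * (B *v fst x) $ i * DV i x (0, 1))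
        = (\<Sum>i\<in>UNIV. ?P + ?Q * (fst x $ i * hgrad B d x $ i))" by (simp only: trm)
    also have "\<dots> = real CARD('m) * ?P + ?Q * (fst x \<bullet> hgrad B d x)"
      unfolding sum.distrib sum_distrib_left[symmetric] sum_constant inner_vec_def inner_real_def by simp
    also have "\<dots> = 2 * real n / d x powr b - b / d x powr (b + 1) * (fst x \<bullet> hgrad B d x)"
      by (simp add: card)
    finally show "2 * real n / d x powr b - b / d x powr (b + 1) * (fst x \<bullet> hgrad B d x)
        = (\<Sum>i\<in>UNIV. DV i x (axis i 1, 0) + 1/2 * (B *v fst x) $ i * DV i x (0, 1))" by simp
  next
    fix K :: "((real^'m) \<times> real) set" assume K: "compact K" "K \<subseteq> -{0}"
    have "continuous_on (-{0}) (\<lambda>x. norm ((1 / d x powr b) *\<^sub>R fst x))"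
      by (intro continuous_intros dcont) (auto dest: dpos)
    from bnd_cont[OF K this] obtain M where "\<forall>x\<in>K. \<bar>norm ((1 / d x powr b) *\<^sub>R fst x)\<bar> \<le> M" by blast
    then show "\<exists>M. \<forall>x\<in>K - Lline. norm ((1 / d x powr b) *\<^sub>R fst x) \<le> M" by auto
  next
    fix K :: "((real^'m) \<times> real) set" assume K: "compact K" "K \<subseteq> -{0}"
    have "continuous_on (-{0}) (\<lambda>x. 2 * real n / d x powr b)"
      by (intro continuous_intros dcont) (auto dest: dpos)
    from bnd_cont[OF K this] obtain M1 where M1: "\<forall>x\<in>K. \<bar>2 * real n / d x powr b\<bar> \<le> M1" by blast
    have "continuous_on (-{0}) (\<lambda>x. \<bar>b / d x powr (b + 1)\<bar> * norm (fst x))"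
      by (intro continuous_intros dcont) (auto dest: dpos)
    from bnd_cont[OF K this] obtain M2 where M2: "M2 \<ge> 0" "\<forall>x\<in>K. \<bar>\<bar>b / d x powr (b + 1)\<bar> * norm (fst x)\<bar> \<le> M2" by blast
    from bnd_reg[OF K] obtain Mh where Mh: "Mh \<ge> 0" "\<forall>x\<in>K - Lline. norm (hgrad B d x) \<le> Mh" by blast
    have "\<bar>2 * real n / d x powr b - b / d x powr (b + 1) * (fst x \<bullet> hgrad B d x)\<bar> \<le> M1 + M2 * Mh"
      if x: "x \<in> K - Lline" for x
    proof -
      have "\<bar>2 * real n / d x powr b - b / d x powr (b + 1) * (fst x \<bullet> hgrad B d x)\<bar>
          \<le> \<bar>2 * real n / d x powr b\<bar> + \<bar>b / d x powr (b + 1) * (fst x \<bullet> hgrad B d x)\<bar>"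
        by (rule abs_triangle_ineq4)
      also have "\<dots> = \<bar>2 * real n / d x powr b\<bar> + \<bar>b / d x powr (b + 1)\<bar> * \<bar>fst x \<bullet> hgrad B d x\<bar>"
        by (simp only: abs_mult)
      also have "\<dots> \<le> \<bar>2 * real n / d x powr b\<bar> + \<bar>b / d x powr (b + 1)\<bar> * (norm (fst x) * norm (hgrad B d x))"
        by (intro add_left_mono mult_left_mono Cauchy_Schwarz_ineq2) auto
      also have "\<dots> = \<bar>2 * real n / d x powr b\<bar> + (\<bar>b / d x powr (b + 1)\<bar> * norm (fst x)) * norm (hgrad B d x)"
        by (simp add: mult.assoc)
      also have "\<dots> \<le> M1 + M2 * Mh"
        using M1 M2 Mh x by (intro add_mono mult_mono) auto
      finally show ?thesis .
    qed
    then show "\<exists>M. \<forall>x\<in>K - Lline. \<bar>2 * real n / d x powr b - b / d x powr (b + 1) * (fst x \<bullet> hgrad B d x)\<bar> \<le> M"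
      by blast
  qed
  then show ?thesis by (rule gdiv.gdiv_main)
qed

end


context hd
begin

definition "hj j x = Dd x (axis j 1, 0) + 1/2 * (B *v fst x) $ j * Dd x (0, 1)"
definition "Dh j x w = D2 (axis j 1, 0) x w + 1/2 * (B *v fst w) $ j * Dd x (0, 1) + 1/2 * (B *v fst x) $ j * D2 (0, 1) x w"

lemma hj_eq: "hgrad B d x $ j = hj j x" by (simp add: hj_def hgrad_d)

lemma hj_der: "x \<notin> Lline \<Longrightarrow> (hj j has_derivative Dh j x) (at x)"
  unfolding hj_def[abs_def]
  by (rule has_derivative_eq_rhs[OF has_derivative_add[OF D2der
        has_derivative_mult[OF has_derivative_mult[OF has_derivative_const Bz_deriv] D2der]]])
     (auto simp: Dh_def fun_eq_iff algebra_simps)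

lemma Dh_cont: "continuous_on (-Lline) (\<lambda>x. Dh j x v)"
  unfolding Dh_def by (intro continuous_intros D2c Ddc Bz_cont)

lemma B_axis: "(B *v axis i 1) $ j = B $ j $ i"
  by (simp add: matrix_vector_mult_basis column_def)

lemma Xij: "x \<notin> Lline \<Longrightarrow> Dh j x (axis i 1, 0) + 1/2 * (B *v fst x) $ i * Dh j x (0, 1)
   = (D2 (axis j 1, 0) x (axis i 1, 0) + 1/2 * (B *v fst x) $ j * D2 (0, 1) x (axis i 1, 0)
      + 1/2 * (B *v fst x) $ i * D2 (axis j 1, 0) x (0, 1) + 1/4 * (B *v fst x) $ i * (B *v fst x) $ j * D2 (0, 1) x (0, 1))
     + 1/2 * B $ j $ i * Dd x (0, 1)"
  by (simp add: Dh_def B_axis algebra_simps)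

lemma Qsym: "x \<notin> Lline \<Longrightarrow>
   (D2 (axis j 1, 0) x (axis i 1, 0) + 1/2 * (B *v fst x) $ j * D2 (0, 1) x (axis i 1, 0)
      + 1/2 * (B *v fst x) $ i * D2 (axis j 1, 0) x (0, 1) + 1/4 * (B *v fst x) $ i * (B *v fst x) $ j * D2 (0, 1) x (0, 1))
   = (D2 (axis i 1, 0) x (axis j 1, 0) + 1/2 * (B *v fst x) $ i * D2 (0, 1) x (axis j 1, 0)
      + 1/2 * (B *v fst x) $ j * D2 (axis i 1, 0) x (0, 1) + 1/4 * (B *v fst x) $ j * (B *v fst x) $ i * D2 (0, 1) x (0, 1))"
  using sym2[of x "(axis j 1, 0)" "(axis i 1, 0)"] sym2[of x "(0, 1)" "(axis i 1, 0)"] sym2[of x "(axis j 1, 0)" "(0, 1)"]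
    sym2[of x "(0, 1)" "(axis j 1, 0)"] sym2[of x "(axis i 1, 0)" "(0, 1)"]
  by (simp add: algebra_simps)


lemma part1:
  fixes a :: real
  shows "hdiv_eq B (-{0}) (\<lambda>x. (snd x / d x powr a) *\<^sub>R (C *v hgrad B d x))
     (\<lambda>x. - (1/2) * (fst x \<bullet> hgrad B d x) / d x powr a + real n * snd x / d x powr a * dt d x)"
proof -
  define W where "W i x = (\<Sum>j\<in>UNIV. C $ i $ j * hj j x)" for i x
  define DW where "DW i x w = (\<Sum>j\<in>UNIV. C $ i $ j * Dh j x w)" for i x w
  define f where "f x = snd x * (1 / d x powr a)" for x :: "(real^'m) \<times> real"
  define Df where "Df x w = snd w * (1 / d x powr a) + snd x * (Dd x w * (- a / d x powr (a + 1)))" for x w :: "(real^'m) \<times> real"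
  define DV where "DV i x w = Df x w * W i x + f x * DW i x w" for i x w
  have Veq: "((snd x / d x powr a) *\<^sub>R (C *v hgrad B d x)) $ i = f x * W i x" for i x
    by (simp add: f_def W_def matrix_vector_mult_def hj_eq sum_distrib_left)
  have snd_der: "((\<lambda>y :: (real^'m) \<times> real. snd y) has_derivative (\<lambda>w. snd w)) (at x)" for x
    by (rule bounded_linear_imp_has_derivative[OF bounded_linear_snd])
  have fder: "(f has_derivative Df x) (at x)" if x: "x \<notin> Lline" for x
    unfolding f_def[abs_def]
    by (rule has_derivative_eq_rhs[OF has_derivative_mult[OF snd_der invpow_der[OF dposL[OF x] dder[OF x]]]])
      (auto simp: Df_def fun_eq_iff algebra_simps)
  have Wder: "(W i has_derivative DW i x) (at x)" if x: "x \<notin> Lline" for i x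
  proof -
    have "((\<lambda>y. \<Sum>j\<in>UNIV. C $ i $ j * hj j y) has_derivative (\<lambda>w. \<Sum>j\<in>UNIV. C $ i $ j * Dh j x w)) (at x)"
      by (intro has_derivative_sum has_derivative_eq_rhs[OF has_derivative_mult[OF has_derivative_const hj_der[OF x]]])
        (auto simp: fun_eq_iff)
    then show ?thesis unfolding W_def[abs_def] DW_def .
  qed
  have "gdiv B (\<lambda>x. (snd x / d x powr a) *\<^sub>R (C *v hgrad B d x))
     (\<lambda>x. - (1/2) * (fst x \<bullet> hgrad B d x) / d x powr a + real n * snd x / d x powr a * dt d x) DV"
  proof (unfold_locales)
    show "2 \<le> CARD('m)" by (rule card2)
  next
    fix i and x :: "(real^'m) \<times> real" assume x: "x \<notin> Lline"
    have "((\<lambda>y. f y * W i y) has_derivative (\<lambda>w. f x * DW i x w + Df x w * W i x)) (at x)"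
      by (rule has_derivative_mult[OF fder[OF x] Wder[OF x]])
    then show "((\<lambda>y. ((snd y / d y powr a) *\<^sub>R (C *v hgrad B d y)) $ i) has_derivative DV i x) (at x)"
      unfolding Veq by (rule has_derivative_eq_rhs) (auto simp: DV_def fun_eq_iff)
  next
    fix i v
    have "continuous_on (-Lline) (\<lambda>x. Df x v * W i x + f x * DW i x v)"
      unfolding Df_def W_def f_def DW_def hj_def
      by (intro continuous_intros Ddc dcont Dh_cont Bz_cont) (auto dest: dposL)
    then show "continuous_on (-Lline) (\<lambda>x. DV i x v)" by (simp add: DV_def)
  next
    fix x :: "(real^'m) \<times> real" assume x: "x \<notin> Lline"
    show "- (1/2) * (fst x \<bullet> hgrad B d x) / d x powr a + real n * snd x / d x powr a * dt d x
        = (\<Sum>i\<in>UNIV. DV i x (axis i 1, 0) + 1/2 * (B *v fst x) $ i * DV i x (0, 1))"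
    proof -
    let ?Bz = "B *v fst x" and ?P = "1 / d x powr a" and ?Q = "- a / d x powr (a + 1)" and ?ht = "Dd x (0, 1)"
      and ?hv = "hgrad B d x"
    define Qs where "Qs i j = D2 (axis j 1, 0) x (axis i 1, 0) + 1/2 * ?Bz $ j * D2 (0, 1) x (axis i 1, 0)
      + 1/2 * ?Bz $ i * D2 (axis j 1, 0) x (0, 1) + 1/4 * ?Bz $ i * ?Bz $ j * D2 (0, 1) x (0, 1)" for i j
    have Qss: "Qs i j = Qs j i" for i j unfolding Qs_def using Qsym[OF x, of j i] by simp
    have dw: "DW i x (axis i 1, 0) + 1/2 * ?Bz $ i * DW i x (0, 1) = (\<Sum>j\<in>UNIV. C $ i $ j * (Qs i j + 1/2 * B $ j $ i * ?ht))" for i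
    proof -
      have "DW i x (axis i 1, 0) + 1/2 * ?Bz $ i * DW i x (0, 1)
          = (\<Sum>j\<in>UNIV. C $ i $ j * Dh j x (axis i 1, 0) + 1/2 * ?Bz $ i * (C $ i $ j * Dh j x (0, 1)))"
        unfolding DW_def sum_distrib_left sum.distrib ..
      also have "\<dots> = (\<Sum>j\<in>UNIV. C $ i $ j * (Qs i j + 1/2 * B $ j $ i * ?ht))"
      proof (rule sum.cong[OF refl])
        fix j
        have "C $ i $ j * Dh j x (axis i 1, 0) + 1/2 * ?Bz $ i * (C $ i $ j * Dh j x (0, 1))
            = C $ i $ j * (Dh j x (axis i 1, 0) + 1/2 * ?Bz $ i * Dh j x (0, 1))" by (simp add: algebra_simps)
        also have "\<dots> = C $ i $ j * (Qs i j + 1/2 * B $ j $ i * ?ht)" unfolding Xij[OF x] Qs_def by simp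
        finally show "C $ i $ j * Dh j x (axis i 1, 0) + 1/2 * ?Bz $ i * (C $ i $ j * Dh j x (0, 1))
            = C $ i $ j * (Qs i j + 1/2 * B $ j $ i * ?ht)" .
      qed
      finally show ?thesis .
    qed
    have df: "Df x (axis i 1, 0) + 1/2 * ?Bz $ i * Df x (0, 1) = 1/2 * ?Bz $ i * ?P + snd x * ?Q * hj i x" for i
      by (simp add: Df_def hj_def algebra_simps)
    have Wv: "W i x = (C *v ?hv) $ i" for i by (simp add: W_def matrix_vector_mult_def hj_eq)
    have S1: "DV i x (axis i 1, 0) + 1/2 * ?Bz $ i * DV i x (0, 1)
        = (1/2 * ?P) * (?Bz $ i * (C *v ?hv) $ i) + (snd x * ?Q) * (?hv $ i * (C *v ?hv) $ i)
          + f x * (\<Sum>j\<in>UNIV. C $ i $ j * (Qs i j + 1/2 * B $ j $ i * ?ht))" for i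
    proof -
      have "DV i x (axis i 1, 0) + 1/2 * ?Bz $ i * DV i x (0, 1)
          = (Df x (axis i 1, 0) + 1/2 * ?Bz $ i * Df x (0, 1)) * W i x
            + f x * (DW i x (axis i 1, 0) + 1/2 * ?Bz $ i * DW i x (0, 1))"
        by (simp add: DV_def algebra_simps)
      also have "\<dots> = (1/2 * ?Bz $ i * ?P + snd x * ?Q * hj i x) * W i x
            + f x * (\<Sum>j\<in>UNIV. C $ i $ j * (Qs i j + 1/2 * B $ j $ i * ?ht))"
        unfolding df dw ..
      finally show ?thesis unfolding Wv hj_eq[symmetric] by (simp add: algebra_simps)
    qed
    have sumB: "(\<Sum>i\<in>UNIV. \<Sum>j\<in>UNIV. C $ i $ j * (Qs i j + 1/2 * B $ j $ i * ?ht)) = 1/2 * ?ht * real CARD('m)"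
    proof -
      have "(\<Sum>i\<in>UNIV. \<Sum>j\<in>UNIV. C $ i $ j * (Qs i j + 1/2 * B $ j $ i * ?ht))
          = (\<Sum>i\<in>UNIV. \<Sum>j\<in>UNIV. C $ i $ j * Qs i j) + 1/2 * ?ht * (\<Sum>i\<in>UNIV. \<Sum>j\<in>UNIV. C $ i $ j * B $ j $ i)"
        by (simp add: algebra_simps sum.distrib sum_distrib_left)
      also have "\<dots> = 1/2 * ?ht * real CARD('m)" using LA5[of Qs, OF Qss] LA4 by simp
      finally show ?thesis .
    qed
    have "(\<Sum>i\<in>UNIV. DV i x (axis i 1, 0) + 1/2 * ?Bz $ i * DV i x (0, 1))
        = (1/2 * ?P) * (?Bz \<bullet> (C *v ?hv)) + (snd x * ?Q) * (?hv \<bullet> (C *v ?hv))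
          + f x * (\<Sum>i\<in>UNIV. \<Sum>j\<in>UNIV. C $ i $ j * (Qs i j + 1/2 * B $ j $ i * ?ht))"
      unfolding S1 inner_vec_def inner_real_def sum.distrib sum_distrib_left ..
    also have "\<dots> = - (1/2 * ?P) * (fst x \<bullet> ?hv) + f x * (1/2 * ?ht * real CARD('m))"
      unfolding LA2 LA3 sumB by simp
    also have "\<dots> = - (1/2) * (fst x \<bullet> hgrad B d x) / d x powr a + real n * snd x / d x powr a * dt d x"
      by (simp add: f_def card dt_d)
    finally show "- (1/2) * (fst x \<bullet> hgrad B d x) / d x powr a + real n * snd x / d x powr a * dt d x
        = (\<Sum>i\<in>UNIV. DV i x (axis i 1, 0) + 1/2 * (B *v fst x) $ i * DV i x (0, 1))" by simp
    qed
  next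
    fix K :: "((real^'m) \<times> real) set" assume K: "compact K" "K \<subseteq> -{0}"
    have "continuous_on (-{0}) (\<lambda>x. snd x / d x powr a)"
      by (intro continuous_intros dcont) (auto dest: dpos)
    from bnd_cont[OF K this] obtain M1 where M1: "M1 \<ge> 0" "\<forall>x\<in>K. \<bar>snd x / d x powr a\<bar> \<le> M1" by blast
    from bnd_reg[OF K] obtain Mh where Mh: "Mh \<ge> 0" "\<forall>x\<in>K - Lline. norm (hgrad B d x) \<le> Mh" by blast
    obtain Kc where Kc: "Kc > 0" "\<And>v. norm (C *v v) \<le> norm v * Kc"
      using bounded_linear.pos_bounded[OF matrix_vector_mul_bounded_linear[of C]] by blast
    have "norm ((snd x / d x powr a) *\<^sub>R (C *v hgrad B d x)) \<le> M1 * (Mh * Kc)" if x: "x \<in> K - Lline" for x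
    proof -
      have "norm ((snd x / d x powr a) *\<^sub>R (C *v hgrad B d x)) = \<bar>snd x / d x powr a\<bar> * norm (C *v hgrad B d x)"
        by simp
      also have "\<dots> \<le> M1 * (Mh * Kc)"
      proof (rule mult_mono)
        show "norm (C *v hgrad B d x) \<le> Mh * Kc"
          using Kc(2)[of "hgrad B d x"] Mh x Kc(1) by (meson mult_right_mono less_imp_le order_trans)
      qed (use M1 x in auto)
      finally show ?thesis .
    qed
    then show "\<exists>M. \<forall>x\<in>K - Lline. norm ((snd x / d x powr a) *\<^sub>R (C *v hgrad B d x)) \<le> M" by blast
  next
    fix K :: "((real^'m) \<times> real) set" assume K: "compact K" "K \<subseteq> -{0}"
    have "continuous_on (-{0}) (\<lambda>x. 1/2 * norm (fst x) / d x powr a)"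
      by (intro continuous_intros dcont) (auto dest: dpos)
    from bnd_cont[OF K this] obtain M1 where M1: "M1 \<ge> 0" "\<forall>x\<in>K. \<bar>1/2 * norm (fst x) / d x powr a\<bar> \<le> M1" by blast
    have "continuous_on (-{0}) (\<lambda>x. real n * snd x / d x powr a)"
      by (intro continuous_intros dcont) (auto dest: dpos)
    from bnd_cont[OF K this] obtain M2 where M2: "M2 \<ge> 0" "\<forall>x\<in>K. \<bar>real n * snd x / d x powr a\<bar> \<le> M2" by blast
    from bnd_reg[OF K] obtain Mh where Mh: "Mh \<ge> 0" "\<forall>x\<in>K - Lline. norm (hgrad B d x) \<le> Mh \<and> \<bar>dt d x\<bar> \<le> Mh" by blast
    have "\<bar>- (1/2) * (fst x \<bullet> hgrad B d x) / d x powr a + real n * snd x / d x powr a * dt d x\<bar> \<le> M1 * Mh + M2 * Mh"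
      if x: "x \<in> K - Lline" for x
    proof -
      have "\<bar>- (1/2) * (fst x \<bullet> hgrad B d x) / d x powr a + real n * snd x / d x powr a * dt d x\<bar>
          \<le> \<bar>- (1/2) * (fst x \<bullet> hgrad B d x) / d x powr a\<bar> + \<bar>real n * snd x / d x powr a * dt d x\<bar>"
        by (rule abs_triangle_ineq)
      also have "\<bar>- (1/2) * (fst x \<bullet> hgrad B d x) / d x powr a\<bar> = \<bar>1/2 / d x powr a\<bar> * \<bar>fst x \<bullet> hgrad B d x\<bar>"
        by (simp add: abs_mult)
      also have "\<dots> \<le> \<bar>1/2 / d x powr a\<bar> * (norm (fst x) * norm (hgrad B d x))"
        by (intro mult_left_mono Cauchy_Schwarz_ineq2) auto
      also have "\<dots> = \<bar>1/2 * norm (fst x) / d x powr a\<bar> * norm (hgrad B d x)"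
        by (simp add: abs_mult)
      also have "\<dots> \<le> M1 * Mh" using M1 Mh x by (intro mult_mono) auto
      also have "\<bar>real n * snd x / d x powr a * dt d x\<bar> = \<bar>real n * snd x / d x powr a\<bar> * \<bar>dt d x\<bar>"
        by (simp only: abs_mult)
      also have "\<dots> \<le> M2 * Mh" using M2 Mh x by (intro mult_mono) auto
      finally show ?thesis by simp
    qed
    then show "\<exists>M. \<forall>x\<in>K - Lline. \<bar>- (1/2) * (fst x \<bullet> hgrad B d x) / d x powr a + real n * snd x / d x powr a * dt d x\<bar> \<le> M"
      by blast
  qed
  then show ?thesis by (rule gdiv.gdiv_main)
qed

end


theorem lemma2p3:
  fixes n :: nat and B :: "real^'m::finite^'m" and p \<theta> :: real
    and d :: "(real^'m) \<times> real \<Rightarrow> real"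
  assumes "CARD('m) = 2 * n"
    and "transpose B = - B"
    and "\<forall>x. B *v x = 0 \<longrightarrow> x = 0"
    and "p \<ge> 2"
    and "pos_homogeneous d" and "regular B d"
  shows "hdiv_eq B (- {0})
           (\<lambda>(z, t). (t / d (z, t) powr (p * \<theta> + 1)) *\<^sub>R (matrix_inv B *v hgrad B d (z, t)))
           (\<lambda>(z, t). - (1/2) * (z \<bullet> hgrad B d (z, t)) / d (z, t) powr (p * \<theta> + 1)
                     + real n * t / d (z, t) powr (p * \<theta> + 1) * dt d (z, t))
       \<and> hdiv_eq B (- {0})
           (\<lambda>(z, t). (1 / d (z, t) powr (p * \<theta>)) *\<^sub>R z)
           (\<lambda>(z, t). 2 * real n / d (z, t) powr (p * \<theta>)
                     - p * \<theta> / d (z, t) powr (p * \<theta> + 1) * (z \<bullet> hgrad B d (z, t)))"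
proof -
  interpret hd B d n
    by (unfold_locales) (use assms in auto)
  have e1: "(\<lambda>(z, t). (t / d (z, t) powr (p * \<theta> + 1)) *\<^sub>R (matrix_inv B *v hgrad B d (z, t)))
      = (\<lambda>x. (snd x / d x powr (p * \<theta> + 1)) *\<^sub>R (C *v hgrad B d x))"
    by (auto simp: C_def fun_eq_iff)
  have e2: "(\<lambda>(z, t). - (1/2) * (z \<bullet> hgrad B d (z, t)) / d (z, t) powr (p * \<theta> + 1)
                     + real n * t / d (z, t) powr (p * \<theta> + 1) * dt d (z, t))
      = (\<lambda>x. - (1/2) * (fst x \<bullet> hgrad B d x) / d x powr (p * \<theta> + 1) + real n * snd x / d x powr (p * \<theta> + 1) * dt d x)"
    by (auto simp: fun_eq_iff)
  have e3: "(\<lambda>(z, t). (1 / d (z, t) powr (p * \<theta>)) *\<^sub>R z) = (\<lambda>x. (1 / d x powr (p * \<theta>)) *\<^sub>R fst x)"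
    by (auto simp: fun_eq_iff)
  have e4: "(\<lambda>(z, t). 2 * real n / d (z, t) powr (p * \<theta>)
                     - p * \<theta> / d (z, t) powr (p * \<theta> + 1) * (z \<bullet> hgrad B d (z, t)))
      = (\<lambda>x. 2 * real n / d x powr (p * \<theta>) - p * \<theta> / d x powr (p * \<theta> + 1) * (fst x \<bullet> hgrad B d x))"
    by (auto simp: fun_eq_iff)
  show ?thesis unfolding e1 e2 e3 e4 using part1[of "p * \<theta> + 1"] part2[of "p * \<theta>"] by blast
qed


end
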